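(* Consider the Hadamard walk, i.e. the quantum random walk determined by $U=H=\frac{1}{\sqrt2}\begin{pmatrix}1&1\\1&-1\end{pmatrix}$. (a) For every $\varphi={}^t[\alpha,\beta]$ with $|\alpha|=|\beta|=1/\sqrt2$ and $\alpha\overline\beta+\overline\alpha\beta=0$, one has $E(X_n^{\varphi})=0$ for all $n$ and $\mathrm{sd}(X_n^{\varphi})/n\to\sqrt{(2-\sqrt2)/2}$ as $n\to\infty$. (b) For $\varphi={}^t[0,e^{i\theta}]$, $\theta\in[0,2\pi)$, $X_n^{\varphi}/n$ converges in distribution to the law with density $\frac{1}{\pi(1-x)\sqrt{1-2x^2}}$ on $(-\sqrt2/2,\sqrt2/2)$, and $E(X_n^{\varphi})/n\to(2-\sqrt2)/2$, $\mathrm{sd}(X_n^{\varphi})/n\to\sqrt{(\sqrt2-1)/2}$. (c) For $\varphi={}^t[e^{i\theta},0]$, $X_n^{\varphi}/n$ converges in distribution to the law with density $\frac{1}{\pi(1+x)\sqrt{1-2x^2}}$ on $(-\sqrt2/2,\sqrt2/2)$, and $\mathrm{sd}(X_n^{\varphi})/n\to\sqrt{(\sqrt2-1)/2}$.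
   Context: Quantum random walk on $\mathbf{Z}$ determined by a $2\times2$ unitary matrix $U=\begin{pmatrix} a & b\\ c & d\end{pmatrix}$: set $P=\begin{pmatrix} a & b\\ 0&0\end{pmatrix}$, $Q=\begin{pmatrix} 0&0\\ c & d\end{pmatrix}$. Given $\varphi={}^t[\alpha,\beta]\in\mathbf{C}^2$ with $|\alpha|^2+|\beta|^2=1$, define $\Psi_0(0)=\varphi$, $\Psi_k(0)=0$ for $k\ne0$, $\Psi_k(n+1)=P\Psi_{k+1}(n)+Q\Psi_{k-1}(n)$; $X_n^{\varphi}$ takes value $k$ with probability $\|\Psi_k(n)\|^2$. $\mathrm{sd}(X)$ denotes the standard deviation of $X$. *)

theory Defs
  imports "HOL-Probability.Probability"
begin

text \<open>Quantum random walk on the integers determined by U = [[a,b],[c,d]].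
  A vector in C^2 is represented as a pair (first, second component).
  P = [[a,b],[0,0]], Q = [[0,0],[c,d]].\<close>

fun qw_Psi :: "complex \<Rightarrow> complex \<Rightarrow> complex \<Rightarrow> complex \<Rightarrow> complex \<times> complex
                 \<Rightarrow> nat \<Rightarrow> int \<Rightarrow> complex \<times> complex" where
  "qw_Psi a b c d \<phi> 0 k = (if k = 0 then \<phi> else (0, 0))"
| "qw_Psi a b c d \<phi> (Suc n) k =
     (let (x1, y1) = qw_Psi a b c d \<phi> n (k + 1);
          (x2, y2) = qw_Psi a b c d \<phi> n (k - 1)
      in (a * x1 + b * y1, c * x2 + d * y2))"

definition qw_prob :: "complex \<Rightarrow> complex \<Rightarrow> complex \<Rightarrow> complex \<Rightarrow> complex \<times> complex
                 \<Rightarrow> nat \<Rightarrow> int \<Rightarrow> real" where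
  "qw_prob a b c d \<phi> n k =
     (cmod (fst (qw_Psi a b c d \<phi> n k)))\<^sup>2 + (cmod (snd (qw_Psi a b c d \<phi> n k)))\<^sup>2"

definition had_prob :: "complex \<times> complex \<Rightarrow> nat \<Rightarrow> int \<Rightarrow> real" where
  "had_prob \<phi> n k = qw_prob (1 / sqrt 2) (1 / sqrt 2) (1 / sqrt 2) (- 1 / sqrt 2) \<phi> n k"

text \<open>X_n is supported in {-n..n}, so its moments are finite sums over this range.\<close>
definition had_E :: "complex \<times> complex \<Rightarrow> nat \<Rightarrow> real" where
  "had_E \<phi> n = (\<Sum>k\<in>{- int n..int n}. real_of_int k * had_prob \<phi> n k)"

definition had_Var :: "complex \<times> complex \<Rightarrow> nat \<Rightarrow> real" where
  "had_Var \<phi> n = (\<Sum>k\<in>{- int n..int n}. (real_of_int k - had_E \<phi> n)\<^sup>2 * had_prob \<phi> n k)"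

definition had_sd :: "complex \<times> complex \<Rightarrow> nat \<Rightarrow> real" where
  "had_sd \<phi> n = sqrt (had_Var \<phi> n)"

definition had_cdf_scaled :: "complex \<times> complex \<Rightarrow> nat \<Rightarrow> real \<Rightarrow> real" where
  "had_cdf_scaled \<phi> n x =
     (\<Sum>k\<in>{k\<in>{- int n..int n}. real_of_int k / real n \<le> x}. had_prob \<phi> n k)"

end

theory Submission
  imports Defs
begin

definition hs :: complex where "hs = complex_of_real (1 / sqrt 2)"

definition hP :: "complex \<times> complex \<Rightarrow> nat \<Rightarrow> int \<Rightarrow> complex \<times> complex" where
  "hP \<phi> n k = qw_Psi hs hs hs (complex_of_real (- 1 / sqrt 2)) \<phi> n k"

definition nsq :: "complex \<times> complex \<Rightarrow> real" where
  "nsq u = (cmod (fst u))\<^sup>2 + (cmod (snd u))\<^sup>2"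

definition ip :: "complex \<times> complex \<Rightarrow> complex \<times> complex \<Rightarrow> complex" where
  "ip u w = cnj (fst u) * fst w + cnj (snd u) * snd w"

lemma hs_sq: "hs * hs = 1/2"
  unfolding hs_def by (simp flip: of_real_mult)

lemma cnj_hs[simp]: "cnj hs = hs" by (simp add: hs_def)

lemma hP_0: "hP \<phi> 0 k = (if k = 0 then \<phi> else (0,0))"
  by (simp add: hP_def)

lemma hP_Suc: "hP \<phi> (Suc n) k =
   (hs * (fst (hP \<phi> n (k+1)) + snd (hP \<phi> n (k+1))),
    hs * (fst (hP \<phi> n (k-1)) - snd (hP \<phi> n (k-1))))"
proof -
  have "complex_of_real (- 1 / sqrt 2) = - hs" by (simp add: hs_def)
  then show ?thesis
    by (simp add: hP_def split_beta Let_def algebra_simps)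
qed

lemma had_prob_eq: "had_prob \<phi> n k = nsq (hP \<phi> n k)"
  by (simp add: had_prob_def qw_prob_def nsq_def hP_def hs_def)

lemma ip_self: "ip u u = complex_of_real (nsq u)"
  unfolding ip_def nsq_def of_real_add complex_norm_square by (simp add: mult.commute)

lemma nsq_nonneg: "nsq u \<ge> 0" by (simp add: nsq_def)

lemma hP_out: "int n < \<bar>k\<bar> \<Longrightarrow> hP \<phi> n k = (0,0)"
proof (induction n arbitrary: k)
  case 0 then show ?case by (simp add: hP_0)
next
  case (Suc n)
  have "int n < \<bar>k+1\<bar>" "int n < \<bar>k-1\<bar>" using Suc.prems by auto
  then show ?case using Suc.IH by (simp add: hP_Suc)
qed

definition FT :: "complex \<times> complex \<Rightarrow> nat \<Rightarrow> real \<Rightarrow> complex \<times> complex" where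
  "FT \<phi> n \<theta> = ((\<Sum>k\<in>{-int n..int n}. fst (hP \<phi> n k) * iexp (of_int k * \<theta>)),
                (\<Sum>k\<in>{-int n..int n}. snd (hP \<phi> n k) * iexp (of_int k * \<theta>)))"

lemma FT_superset:
  assumes "finite A" "{-int n..int n} \<subseteq> A"
  shows "FT \<phi> n \<theta> = ((\<Sum>k\<in>A. fst (hP \<phi> n k) * iexp (of_int k * \<theta>)),
                (\<Sum>k\<in>A. snd (hP \<phi> n k) * iexp (of_int k * \<theta>)))"
proof -
  have z: "hP \<phi> n k = (0,0)" if "k \<in> A - {-int n..int n}" for k
    using that by (intro hP_out) auto
  show ?thesis unfolding FT_def
    by (intro prod_eqI; simp; rule sum.mono_neutral_left; use assms z in auto)
qed

definition Uh :: "real \<Rightarrow> complex \<times> complex \<Rightarrow> complex \<times> complex" where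
  "Uh \<theta> u = (iexp (-\<theta>) * hs * (fst u + snd u), iexp \<theta> * hs * (fst u - snd u))"

lemma iexp_add: "iexp (a + b) = iexp a * iexp b"
  by (simp add: distrib_left exp_add)

lemma sum_shift_int:
  "(\<Sum>k\<in>{a..b::int}. f (k + 1)) = (\<Sum>m\<in>{a+1..b+1}. f m)"
  by (rule sum.reindex_bij_witness[of _ "\<lambda>m. m - 1" "\<lambda>k. k + 1"]) auto

lemma sum_shift_int':
  "(\<Sum>k\<in>{a..b::int}. f (k - 1)) = (\<Sum>m\<in>{a-1..b-1}. f m)"
  by (rule sum.reindex_bij_witness[of _ "\<lambda>m. m + 1" "\<lambda>k. k - 1"]) auto

lemma FT_Suc: "FT \<phi> (Suc n) \<theta> = Uh \<theta> (FT \<phi> n \<theta>)"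
proof -
  let ?f = "\<lambda>k. fst (hP \<phi> n k)" and ?g = "\<lambda>k. snd (hP \<phi> n k)"
  have A1: "FT \<phi> n \<theta> = ((\<Sum>k\<in>{-int n..int n + 2}. ?f k * iexp (of_int k * \<theta>)),
                (\<Sum>k\<in>{-int n..int n+2}. ?g k * iexp (of_int k * \<theta>)))"
    by (rule FT_superset) auto
  have A2: "FT \<phi> n \<theta> = ((\<Sum>k\<in>{-int n - 2..int n}. ?f k * iexp (of_int k * \<theta>)),
                (\<Sum>k\<in>{-int n - 2..int n}. ?g k * iexp (of_int k * \<theta>)))"
    by (rule FT_superset) auto
  have e1: "iexp (of_int (m - 1) * \<theta>) = iexp (-\<theta>) * iexp (of_int m * \<theta>)" for m :: int
    by (subst iexp_add[symmetric]) (simp add: algebra_simps)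
  have e2: "iexp (of_int (m + 1) * \<theta>) = iexp \<theta> * iexp (of_int m * \<theta>)" for m :: int
    by (subst iexp_add[symmetric]) (simp add: algebra_simps)
  have "fst (FT \<phi> (Suc n) \<theta>) =
     (\<Sum>k\<in>{-int n - 1..int n + 1}. hs * (?f (k+1) + ?g (k+1)) * iexp (of_int k * \<theta>))"
    by (simp add: FT_def hP_Suc) (rule sum.cong; simp)
  also have "\<dots> = (\<Sum>k\<in>{-int n - 1..int n + 1}. (\<lambda>m. hs * (?f m + ?g m) * iexp (of_int (m - 1) * \<theta>)) (k+1))"
    by simp
  also have "\<dots> = (\<Sum>m\<in>{-int n..int n + 2}. hs * (?f m + ?g m) * iexp (of_int (m - 1) * \<theta>))"
    by (subst sum_shift_int) (simp add: algebra_simps)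
  also have "\<dots> = iexp (-\<theta>) * hs * ((\<Sum>m\<in>{-int n..int n + 2}. ?f m * iexp (of_int m * \<theta>))
       + (\<Sum>m\<in>{-int n..int n + 2}. ?g m * iexp (of_int m * \<theta>)))"
    by (simp only: sum_distrib_left sum.distrib[symmetric] distrib_left, rule sum.cong[OF refl], simp only: e1, simp add: algebra_simps)
  finally have 1: "fst (FT \<phi> (Suc n) \<theta>) = fst (Uh \<theta> (FT \<phi> n \<theta>))"
    using A1 by (simp add: Uh_def)
  have "snd (FT \<phi> (Suc n) \<theta>) =
     (\<Sum>k\<in>{-int n - 1..int n + 1}. hs * (?f (k-1) - ?g (k-1)) * iexp (of_int k * \<theta>))"
    by (simp add: FT_def hP_Suc) (rule sum.cong; simp)
  also have "\<dots> = (\<Sum>k\<in>{-int n - 1..int n + 1}. (\<lambda>m. hs * (?f m - ?g m) * iexp (of_int (m + 1) * \<theta>)) (k-1))"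
    by simp
  also have "\<dots> = (\<Sum>m\<in>{-int n - 2..int n}. hs * (?f m - ?g m) * iexp (of_int (m + 1) * \<theta>))"
    by (subst sum_shift_int') (simp add: algebra_simps)
  also have "\<dots> = iexp \<theta> * hs * ((\<Sum>m\<in>{-int n - 2..int n}. ?f m * iexp (of_int m * \<theta>))
       - (\<Sum>m\<in>{-int n - 2..int n}. ?g m * iexp (of_int m * \<theta>)))"
    by (simp only: sum_distrib_left sum_subtractf[symmetric] right_diff_distrib, rule sum.cong[OF refl], simp only: e2, simp add: algebra_simps)
  finally have 2: "snd (FT \<phi> (Suc n) \<theta>) = snd (Uh \<theta> (FT \<phi> n \<theta>))"
    using A2 by (simp add: Uh_def)
  show ?thesis using 1 2 by (simp add: prod_eq_iff)
qed

lemma FT_0: "FT \<phi> 0 \<theta> = \<phi>"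
  by (simp add: FT_def hP_0)

lemma cnj_iexp: "cnj (iexp x) = iexp (- x)"
  apply (subst exp_cnj) by simp

lemma iexp_cnj_mult: "cnj (iexp x) * iexp x = 1"
  by (simp add: cnj_iexp flip: exp_add)

lemma ip_Uh: "ip (Uh \<theta> u) (Uh \<theta> w) = ip u w"
proof -
  have a: "cnj (iexp (-\<theta>)) * iexp (-\<theta>) = 1" "cnj (iexp \<theta>) * iexp \<theta> = 1"
    by (rule iexp_cnj_mult)+
  have "ip (Uh \<theta> u) (Uh \<theta> w) =
     (cnj (iexp (-\<theta>)) * iexp (-\<theta>)) * (hs * hs) * (cnj (fst u + snd u) * (fst w + snd w))
   + (cnj (iexp \<theta>) * iexp \<theta>) * (hs * hs) * (cnj (fst u - snd u) * (fst w - snd w))"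
    by (simp add: ip_def Uh_def algebra_simps)
  also have "\<dots> = ip u w" unfolding a hs_sq by (simp add: ip_def algebra_simps)
  finally show ?thesis .
qed

lemma ip_FT_self: "ip (FT \<phi> n \<theta>) (FT \<phi> n \<theta>) = ip \<phi> \<phi>"
  by (induction n) (simp_all add: FT_0 FT_Suc ip_Uh)

lemma has_vd_iexp_lin:
  "((\<lambda>\<theta>. iexp (c * \<theta>)) has_vector_derivative (\<i> * of_real c * iexp (c * \<theta>))) (at \<theta> within s)"
proof -
  have "((\<lambda>z. exp (\<i> * of_real c * z)) has_field_derivative
          (\<i> * of_real c * exp (\<i> * of_real c * of_real \<theta>))) (at (of_real \<theta>))"
    by (auto intro!: derivative_eq_intros)
  from has_vector_derivative_real_field[OF this, of s] show ?thesis
    by (simp add: mult.assoc)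
qed

lemma iexp_int_2pi: "iexp (of_int m * (a + 2 * pi)) = iexp (of_int m * a)"
proof -
  have "iexp (of_int m * (a + 2 * pi)) = iexp (of_int m * a) * exp (complex_of_real (2 * of_int m * pi) * \<i>)"
    by (simp add: algebra_simps flip: exp_add)
  also have "\<dots> = iexp (of_int m * a)" by (subst exp_integer_2pi) auto
  finally show ?thesis .
qed

lemma orth_has_integral:
  "((\<lambda>\<theta>. iexp (of_int m * \<theta>)) has_integral (if m = 0 then 2 * pi else 0)) {a..a + 2 * pi}"
proof (cases "m = 0")
  case True
  then show ?thesis using has_integral_const_real[of "1::complex" a "a + 2*pi"]
    by (simp add: scaleR_conv_of_real)
next
  case False
  let ?F = "\<lambda>\<theta>. iexp (of_int m * \<theta>) / (\<i> * of_int m)"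
  have d: "(?F has_vector_derivative iexp (of_int m * \<theta>)) (at \<theta> within {a..a+2*pi})" for \<theta>
    using has_vector_derivative_divide[OF has_vd_iexp_lin[of "of_int m" \<theta>], of "\<i> * of_int m"] False
    by simp
  have "((\<lambda>\<theta>. iexp (of_int m * \<theta>)) has_integral (?F (a + 2*pi) - ?F a)) {a..a + 2 * pi}"
    by (rule fundamental_theorem_of_calculus) (use d in auto)
  then show ?thesis using False by (simp only: iexp_int_2pi) simp
qed

lemma FT_cont1: "continuous_on S (\<lambda>\<theta>. fst (FT \<phi> n \<theta>))"
  unfolding FT_def by (simp; intro continuous_intros)
lemma FT_cont2: "continuous_on S (\<lambda>\<theta>. snd (FT \<phi> n \<theta>))"
  unfolding FT_def by (simp; intro continuous_intros)

lemma ip_FT_cont: "continuous_on S (\<lambda>\<theta>. ip (FT \<phi> n (f \<theta>)) (FT \<phi> n (g \<theta>)))"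
  if "continuous_on S f" "continuous_on S g"
  unfolding ip_def
  by (intro continuous_intros continuous_on_compose2[OF FT_cont1 that(1)] continuous_on_compose2[OF FT_cont2 that(1)]
      continuous_on_compose2[OF FT_cont1 that(2)] continuous_on_compose2[OF FT_cont2 that(2)]) auto

lemma char_FT:
  "(2 * pi) * (\<Sum>k\<in>{-int n..int n}. complex_of_real (had_prob \<phi> n k) * iexp (of_int k * h))
     = integral {a..a + 2 * pi} (\<lambda>\<theta>. ip (FT \<phi> n \<theta>) (FT \<phi> n (\<theta> + h)))"
proof -
  define S where "S = {-int n..int n}"
  define f where "f k = fst (hP \<phi> n k)" for k
  define g where "g k = snd (hP \<phi> n k)" for k
  define c where "c k m = (cnj (f k) * f m + cnj (g k) * g m) * iexp (of_int m * h)" for k m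
  have fin: "finite S" by (simp add: S_def)
  have trm: "cnj (iexp (of_int k * \<theta>)) * iexp (of_int m * (\<theta> + h)) =
      iexp (of_int m * h) * iexp (of_int (m - k) * \<theta>)" for k m :: int and \<theta>
  proof -
    have "cnj (iexp (of_int k * \<theta>)) * iexp (of_int m * (\<theta> + h)) = iexp (of_int m * h + of_int (m - k) * \<theta>)"
      unfolding cnj_iexp by (simp only: iexp_add[symmetric]) (simp add: algebra_simps)
    then show ?thesis by (simp only: iexp_add)
  qed
  have eq: "ip (FT \<phi> n \<theta>) (FT \<phi> n (\<theta> + h)) = (\<Sum>k\<in>S. \<Sum>m\<in>S. c k m * iexp (of_int (m - k) * \<theta>))" for \<theta>
  proof -
    have "ip (FT \<phi> n \<theta>) (FT \<phi> n (\<theta> + h)) =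
      (\<Sum>k\<in>S. \<Sum>m\<in>S. cnj (f k * iexp (of_int k * \<theta>)) * (f m * iexp (of_int m * (\<theta> + h))))
    + (\<Sum>k\<in>S. \<Sum>m\<in>S. cnj (g k * iexp (of_int k * \<theta>)) * (g m * iexp (of_int m * (\<theta> + h))))"
      unfolding ip_def FT_def S_def[symmetric] f_def[symmetric] g_def[symmetric] fst_conv snd_conv
        cnj_sum sum_product by simp
    also have "\<dots> = (\<Sum>k\<in>S. \<Sum>m\<in>S. c k m * iexp (of_int (m - k) * \<theta>))"
      unfolding sum.distrib[symmetric]
    proof (intro sum.cong refl)
      fix k m
      show "cnj (f k * iexp (of_int k * \<theta>)) * (f m * iexp (of_int m * (\<theta> + h))) +
            cnj (g k * iexp (of_int k * \<theta>)) * (g m * iexp (of_int m * (\<theta> + h))) =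
            c k m * iexp (of_int (m - k) * \<theta>)"
        using trm[of k \<theta> m] unfolding c_def complex_cnj_mult
        by (simp add: algebra_simps)
    qed
    finally show ?thesis .
  qed
  have int1: "((\<lambda>\<theta>. c k m * iexp (of_int (m - k) * \<theta>)) has_integral
      (c k m * (if m - k = 0 then 2 * pi else 0))) {a..a + 2 * pi}" for k m
    by (rule has_integral_mult_right) (rule orth_has_integral)
  have "((\<lambda>\<theta>. \<Sum>k\<in>S. \<Sum>m\<in>S. c k m * iexp (of_int (m - k) * \<theta>)) has_integral
          (\<Sum>k\<in>S. \<Sum>m\<in>S. c k m * (if m - k = 0 then 2 * pi else 0))) {a..a + 2 * pi}"
    by (intro has_integral_sum fin int1)
  moreover have "(\<Sum>k\<in>S. \<Sum>m\<in>S. c k m * (if m - k = 0 then 2 * pi else 0)) =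
       (\<Sum>k\<in>S. c k k * (2 * pi))"
  proof (intro sum.cong refl)
    fix k assume "k \<in> S"
    have "(\<Sum>m\<in>S. c k m * (if m - k = 0 then 2 * pi else 0)) = (\<Sum>m\<in>S. if m = k then c k m * (2 * pi) else 0)"
      by (intro sum.cong refl) auto
    also have "\<dots> = c k k * (2 * pi)" using \<open>k \<in> S\<close> fin by (simp add: sum.delta')
    finally show "(\<Sum>m\<in>S. c k m * (if m - k = 0 then 2 * pi else 0)) = c k k * (2 * pi)" .
  qed
  moreover have "c k k = complex_of_real (had_prob \<phi> n k) * iexp (of_int k * h)" for k
    unfolding c_def had_prob_eq f_def g_def
    using ip_self[of "hP \<phi> n k"] by (simp add: ip_def)
  ultimately have "((\<lambda>\<theta>. ip (FT \<phi> n \<theta>) (FT \<phi> n (\<theta> + h))) has_integral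
     (2 * pi) * (\<Sum>k\<in>S. complex_of_real (had_prob \<phi> n k) * iexp (of_int k * h))) {a..a + 2 * pi}"
    unfolding eq by (simp add: sum_distrib_left mult_ac)
  then show ?thesis unfolding S_def by (simp add: integral_unique)
qed

lemma sum_prob: "(\<Sum>k\<in>{-int n..int n}. had_prob \<phi> n k) = nsq \<phi>"
proof -
  have "(2 * pi) * (\<Sum>k\<in>{-int n..int n}. complex_of_real (had_prob \<phi> n k) * iexp (of_int k * 0))
     = integral {0..0 + 2 * pi} (\<lambda>\<theta>. ip (FT \<phi> n \<theta>) (FT \<phi> n (\<theta> + 0)))"
    by (rule char_FT)
  also have "\<dots> = integral {0..2 * pi} (\<lambda>\<theta>. complex_of_real (nsq \<phi>))"
    using ip_FT_self[of \<phi> n] by (simp add: ip_self)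
  also have "\<dots> = (2 * pi) * complex_of_real (nsq \<phi>)" by (simp add: scaleR_conv_of_real)
  finally have "complex_of_real (\<Sum>k\<in>{-int n..int n}. had_prob \<phi> n k) = complex_of_real (nsq \<phi>)"
    by simp
  then show ?thesis using of_real_eq_iff by blast
qed

lemma had_prob_nonneg: "had_prob \<phi> n k \<ge> 0"
  by (simp add: had_prob_eq nsq_nonneg)

lemma iexp_euler: "iexp x = complex_of_real (cos x) + \<i> * complex_of_real (sin x)"
  by (simp add: cis_conv_exp[symmetric] complex_eq_iff)

lemma iexp_euler': "exp (- (\<i> * complex_of_real x)) = complex_of_real (cos x) - \<i> * complex_of_real (sin x)"
  using iexp_euler[of "-x"] by simp

definition rr :: "real \<Rightarrow> real" where "rr \<theta> = sqrt (1 + (cos \<theta>)\<^sup>2)"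
definition om :: "real \<Rightarrow> real" where "om \<theta> = - arcsin (sin \<theta> / sqrt 2)"
definition cc :: "real \<Rightarrow> real" where "cc \<theta> = cos \<theta> / rr \<theta>"
definition l1 :: "real \<Rightarrow> complex" where "l1 \<theta> = iexp (om \<theta>)"
definition l2 :: "real \<Rightarrow> complex" where "l2 \<theta> = - iexp (- om \<theta>)"
definition tau :: "real \<Rightarrow> complex" where "tau \<theta> = hs * (iexp (-\<theta>) - iexp \<theta>)"

lemma rr_pos: "rr \<theta> > 0" by (simp add: rr_def add_pos_nonneg)
lemma rr_sq: "(rr \<theta>)\<^sup>2 = 1 + (cos \<theta>)\<^sup>2" by (simp add: rr_def add_nonneg_nonneg)

lemma sin_div_sqrt2_bound: "\<bar>sin \<theta> / sqrt 2\<bar> < 1"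
proof -
  have "\<bar>sin \<theta>\<bar> \<le> 1" by simp
  moreover have "1 < sqrt 2" by simp
  ultimately have "\<bar>sin \<theta>\<bar> < sqrt 2" by linarith
  then show ?thesis by (simp add: abs_div divide_less_eq)
qed

lemma sin_om: "sin (om \<theta>) = - sin \<theta> / sqrt 2"
proof -
  have c: "sin \<theta> / sqrt 2 < 1 \<and> - (sin \<theta> / sqrt 2) < 1"
    by (rule abs_less_iff[THEN iffD1, OF sin_div_sqrt2_bound[of \<theta>]])
  have bb: "-1 < sin \<theta> / sqrt 2" "sin \<theta> / sqrt 2 < 1"
    using conjunct2[OF c] apply linarith using conjunct1[OF c] .
  have b: "-1 \<le> sin \<theta> / sqrt 2" "sin \<theta> / sqrt 2 \<le> 1"
    by (rule less_imp_le[OF bb(1)], rule less_imp_le[OF bb(2)])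
  show ?thesis unfolding om_def sin_minus using sin_arcsin[OF b] by simp
qed

lemma cos_om: "cos (om \<theta>) = rr \<theta> / sqrt 2"
proof -
  have c: "sin \<theta> / sqrt 2 < 1 \<and> - (sin \<theta> / sqrt 2) < 1"
    by (rule abs_less_iff[THEN iffD1, OF sin_div_sqrt2_bound[of \<theta>]])
  have bb: "-1 < sin \<theta> / sqrt 2" "sin \<theta> / sqrt 2 < 1"
    using conjunct2[OF c] apply linarith using conjunct1[OF c] .
  have b: "-1 \<le> sin \<theta> / sqrt 2" "sin \<theta> / sqrt 2 \<le> 1"
    by (rule less_imp_le[OF bb(1)], rule less_imp_le[OF bb(2)])
  have "cos (om \<theta>) = sqrt (1 - (sin \<theta> / sqrt 2)\<^sup>2)" by (simp add: om_def cos_arcsin b)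
  also have "1 - (sin \<theta> / sqrt 2)\<^sup>2 = (1 + (cos \<theta>)\<^sup>2) / 2"
    by (simp add: power_divide) (smt (verit) sin_cos_squared_add)
  also have "sqrt \<dots> = rr \<theta> / sqrt 2" by (simp add: rr_def real_sqrt_divide)
  finally show ?thesis .
qed

lemma two_div_sqrt2: "2 * (x / sqrt 2) = sqrt 2 * x"
proof -
  have "2 * (x / sqrt 2) = (2 / sqrt 2) * x" by simp
  also have "2 / sqrt 2 = sqrt 2" by (rule real_div_sqrt) simp
  finally show ?thesis .
qed

lemma l1_l2_diff: "l1 \<theta> - l2 \<theta> = complex_of_real (sqrt 2 * rr \<theta>)"
proof -
  have "l1 \<theta> - l2 \<theta> = 2 * complex_of_real (cos (om \<theta>))"
    by (simp add: l1_def l2_def iexp_euler iexp_euler')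
  also have "\<dots> = complex_of_real (sqrt 2 * rr \<theta>)"
  proof -
    have "complex_of_real (2 * cos (om \<theta>)) = complex_of_real (sqrt 2 * rr \<theta>)"
      using two_div_sqrt2[of "rr \<theta>"] unfolding cos_om by simp
    then show ?thesis by simp
  qed
  finally show ?thesis .
qed

lemma l1_l2_diff_nz: "l1 \<theta> - l2 \<theta> \<noteq> 0"
  using rr_pos[of \<theta>] by (simp add: l1_l2_diff)

lemma l1_ne_l2: "l1 \<theta> \<noteq> l2 \<theta>"
  using l1_l2_diff_nz[of \<theta>] by simp

lemma l1_l2_prod: "l1 \<theta> * l2 \<theta> = -1"
  by (simp add: l1_def l2_def flip: exp_add)

lemma l1_l2_sum: "l1 \<theta> + l2 \<theta> = tau \<theta>"
proof -
  have "l1 \<theta> + l2 \<theta> = 2 * \<i> * complex_of_real (sin (om \<theta>))"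
    by (simp add: l1_def l2_def iexp_euler iexp_euler')
  also have "\<dots> = - \<i> * complex_of_real (sqrt 2 * sin \<theta>)"
  proof -
    have "2 * complex_of_real (sin (om \<theta>)) = - complex_of_real (sqrt 2 * sin \<theta>)"
    proof -
      have "complex_of_real (2 * sin (om \<theta>)) = - complex_of_real (sqrt 2 * sin \<theta>)"
        using two_div_sqrt2[of "sin \<theta>"] unfolding sin_om by simp
      then show ?thesis by simp
    qed
    then show ?thesis by (simp add: algebra_simps)
  qed
  also have "\<dots> = tau \<theta>"
  proof -
    have "hs * 2 = complex_of_real (2 * (1 / sqrt 2))" unfolding hs_def by simp
    also have "\<dots> = complex_of_real (sqrt 2)" using two_div_sqrt2[of 1] by simp
    finally have hs2: "hs * 2 = complex_of_real (sqrt 2)" .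
    then show ?thesis
    proof -
      have "tau \<theta> = - \<i> * (hs * 2) * complex_of_real (sin \<theta>)"
        unfolding tau_def iexp_euler iexp_euler' by (simp add: algebra_simps)
      then show ?thesis unfolding hs2 by simp
    qed
  qed
  finally show ?thesis .
qed

lemma cnj_l1: "cnj (l1 \<theta>) = - l2 \<theta>"
  unfolding l1_def l2_def by (simp add: iexp_euler iexp_euler')
lemma cnj_l2: "cnj (l2 \<theta>) = - l1 \<theta>"
  unfolding l1_def l2_def by (simp add: iexp_euler iexp_euler')
lemma norm_l1: "cmod (l1 \<theta>) = 1" by (simp add: l1_def)
lemma norm_l2: "cmod (l2 \<theta>) = 1" by (simp add: l2_def)

definition sc :: "complex \<Rightarrow> complex \<times> complex \<Rightarrow> complex \<times> complex" where
  "sc c u = (c * fst u, c * snd u)"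
definition addv :: "complex \<times> complex \<Rightarrow> complex \<times> complex \<Rightarrow> complex \<times> complex" where
  "addv u w = (fst u + fst w, snd u + snd w)"

lemma Uh_lin: "Uh \<theta> (addv (sc a u) (sc b w)) = addv (sc a (Uh \<theta> u)) (sc b (Uh \<theta> w))"
  by (simp add: Uh_def addv_def sc_def algebra_simps)

lemma Uh_sq: "Uh \<theta> (Uh \<theta> u) = addv (sc (tau \<theta>) (Uh \<theta> u)) u"
proof -
  have e: "iexp (-\<theta>) * iexp \<theta> = 1" by (simp flip: exp_add)
  have h: "hs * hs = 1/2" by (rule hs_sq)
  show ?thesis unfolding Uh_def addv_def sc_def tau_def prod_eq_iff fst_conv snd_conv
    using e h by algebra
qed

definition v1 :: "complex \<times> complex \<Rightarrow> real \<Rightarrow> complex \<times> complex" where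
  "v1 u \<theta> = sc (1 / (l1 \<theta> - l2 \<theta>)) (addv (Uh \<theta> u) (sc (- l2 \<theta>) u))"
definition v2 :: "complex \<times> complex \<Rightarrow> real \<Rightarrow> complex \<times> complex" where
  "v2 u \<theta> = addv u (sc (-1) (v1 u \<theta>))"

lemma v1_eig: "Uh \<theta> (v1 u \<theta>) = sc (l1 \<theta>) (v1 u \<theta>)"
proof -
  have "Uh \<theta> (v1 u \<theta>) = sc (1 / (l1 \<theta> - l2 \<theta>)) (addv (Uh \<theta> (Uh \<theta> u)) (sc (- l2 \<theta>) (Uh \<theta> u)))"
    unfolding v1_def by (simp add: Uh_def addv_def sc_def algebra_simps add_divide_distrib diff_divide_distrib)
  also have "\<dots> = sc (l1 \<theta>) (v1 u \<theta>)"
  proof -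
    have key: "tau \<theta> * z + w - l2 \<theta> * z = l1 \<theta> * (z - l2 \<theta> * w)" for z w
    proof -
      have "tau \<theta> * z + w - l2 \<theta> * z = l1 \<theta> * z + w"
        by (simp add: l1_l2_sum[symmetric] algebra_simps)
      also have "\<dots> = l1 \<theta> * z - (l1 \<theta> * l2 \<theta>) * w" by (simp add: l1_l2_prod)
      finally show ?thesis by (simp add: algebra_simps)
    qed
    show ?thesis unfolding Uh_sq v1_def using key by (simp add: addv_def sc_def prod_eq_iff)
  qed
  finally show ?thesis .
qed


lemma Uh_add: "Uh \<theta> (addv u w) = addv (Uh \<theta> u) (Uh \<theta> w)"
  by (simp add: Uh_def addv_def algebra_simps)
lemma Uh_sc: "Uh \<theta> (sc a u) = sc a (Uh \<theta> u)"
  by (simp add: Uh_def sc_def algebra_simps)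

lemma v2_eig: "Uh \<theta> (v2 u \<theta>) = sc (l2 \<theta>) (v2 u \<theta>)"
proof -
  have d: "l1 \<theta> - l2 \<theta> \<noteq> 0" by (rule l1_l2_diff_nz)
  have "Uh \<theta> (v2 u \<theta>) = addv (Uh \<theta> u) (sc (-1) (sc (l1 \<theta>) (v1 u \<theta>)))"
    unfolding v2_def Uh_add Uh_sc v1_eig ..
  also have "\<dots> = sc (l2 \<theta>) (v2 u \<theta>)"
    unfolding v2_def v1_def using d
    by (simp add: addv_def sc_def prod_eq_iff field_simps)
  finally show ?thesis .
qed

lemma v1_v2_sum: "addv (v1 u \<theta>) (v2 u \<theta>) = u"
  by (simp add: v2_def addv_def sc_def)

lemma FT_repr: "FT \<phi> n \<theta> = addv (sc (l1 \<theta> ^ n) (v1 \<phi> \<theta>)) (sc (l2 \<theta> ^ n) (v2 \<phi> \<theta>))"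
proof (induction n)
  case 0
  then show ?case by (simp add: FT_0 v1_v2_sum[unfolded addv_def] sc_def addv_def)
next
  case (Suc n)
  show ?case unfolding FT_Suc Suc Uh_add Uh_sc v1_eig v2_eig
    by (simp add: sc_def addv_def algebra_simps)
qed

lemma ip_sc: "ip (sc a u) (sc b w) = cnj a * b * ip u w"
  by (simp add: ip_def sc_def algebra_simps)

lemma ipAB: "ip (addv (Uh \<theta> u) (sc (- l2 \<theta>) u)) (addv (sc (l1 \<theta>) u) (sc (-1) (Uh \<theta> u))) = 0"
proof -
  obtain x y where u: "u = (x, y)" by (cases u)
  define e where "e = iexp \<theta>"
  define e' where "e' = iexp (-\<theta>)"
  have ee: "e' * e = 1" unfolding e_def e'_def by (simp flip: exp_add)
  have ce: "cnj e = e'" "cnj e' = e" unfolding e_def e'_def by (simp_all add: iexp_euler iexp_euler')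
  have tt: "l1 \<theta> + l2 \<theta> = hs * (e' - e)" unfolding l1_l2_sum tau_def e_def e'_def ..
  have pp: "l1 \<theta> * l2 \<theta> = -1" by (rule l1_l2_prod)
  have h: "hs * hs = 1/2" by (rule hs_sq)
  have "ip (addv (Uh \<theta> u) (sc (- l2 \<theta>) u)) (addv (sc (l1 \<theta>) u) (sc (-1) (Uh \<theta> u))) =
     (e * hs * (cnj x + cnj y) + l1 \<theta> * cnj x) * (l1 \<theta> * x - e' * hs * (x + y)) +
     (e' * hs * (cnj x - cnj y) + l1 \<theta> * cnj y) * (l1 \<theta> * y - e * hs * (x - y))"
    unfolding u ip_def addv_def sc_def Uh_def e_def[symmetric] e'_def[symmetric]
    by (simp add: ce cnj_l2 algebra_simps)
  also have "\<dots> = 0" using ee tt pp h by algebra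
  finally show ?thesis .
qed

lemma v1_alt: "v1 u \<theta> = sc (1 / (l1 \<theta> - l2 \<theta>)) (addv (Uh \<theta> u) (sc (- l2 \<theta>) u))"
  by (simp add: v1_def)
lemma v2_alt: "v2 u \<theta> = sc (1 / (l1 \<theta> - l2 \<theta>)) (addv (sc (l1 \<theta>) u) (sc (-1) (Uh \<theta> u)))"
  using l1_l2_diff_nz[of \<theta>]
  by (simp add: v2_def v1_def addv_def sc_def prod_eq_iff field_simps)

lemma ip_v1_v2: "ip (v1 u \<theta>) (v2 u \<theta>) = 0"
  unfolding v2_alt v1_alt ip_sc ipAB by simp

lemma nsq_addv: "complex_of_real (nsq (addv a b)) =
   complex_of_real (nsq a) + complex_of_real (nsq b) + ip a b + cnj (ip a b)"
  unfolding ip_self[symmetric] by (simp add: ip_def addv_def algebra_simps)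

lemma nsq_v1_v2: "nsq (v1 u \<theta>) + nsq (v2 u \<theta>) = nsq u"
proof -
  have "complex_of_real (nsq u) = complex_of_real (nsq (v1 u \<theta>) + nsq (v2 u \<theta>))"
    using nsq_addv[of "v1 u \<theta>" "v2 u \<theta>"] unfolding v1_v2_sum ip_v1_v2 by simp
  then show ?thesis using of_real_eq_iff by metis
qed

lemma sqrt_aux: "sqrt (1 - (sin \<theta> / sqrt 2)\<^sup>2) = rr \<theta> / sqrt 2"
proof -
  have "1 - (sin \<theta> / sqrt 2)\<^sup>2 = (1 + (cos \<theta>)\<^sup>2) / 2"
    by (simp add: power_divide) (smt (verit) sin_cos_squared_add)
  then have "sqrt (1 - (sin \<theta> / sqrt 2)\<^sup>2) = sqrt ((1 + (cos \<theta>)\<^sup>2) / 2)" by (simp only:)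
  also have "\<dots> = rr \<theta> / sqrt 2" by (simp add: rr_def real_sqrt_divide)
  finally show ?thesis .
qed

lemma om_deriv: "(om has_real_derivative (- cc \<theta>)) (at \<theta>)"
proof -
  have c: "sin \<theta> / sqrt 2 < 1 \<and> - (sin \<theta> / sqrt 2) < 1"
    by (rule abs_less_iff[THEN iffD1, OF sin_div_sqrt2_bound[of \<theta>]])
  have bb: "-1 < sin \<theta> / sqrt 2" "sin \<theta> / sqrt 2 < 1"
    using conjunct2[OF c] apply linarith using conjunct1[OF c] .
  have g: "((\<lambda>\<theta>. sin \<theta> / sqrt 2) has_real_derivative cos \<theta> / sqrt 2) (at \<theta>)"
    by (intro DERIV_cdivide DERIV_sin)
  have "((\<lambda>\<theta>. arcsin (sin \<theta> / sqrt 2)) has_real_derivative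
      inverse (sqrt (1 - (sin \<theta> / sqrt 2)\<^sup>2)) * (cos \<theta> / sqrt 2)) (at \<theta>)"
    by (rule DERIV_chain2[OF DERIV_arcsin[OF bb] g])
  also have "inverse (sqrt (1 - (sin \<theta> / sqrt 2)\<^sup>2)) * (cos \<theta> / sqrt 2) = cc \<theta>"
    unfolding sqrt_aux cc_def using rr_pos[of \<theta>] by (simp add: field_simps)
  finally have "((\<lambda>\<theta>. arcsin (sin \<theta> / sqrt 2)) has_real_derivative cc \<theta>) (at \<theta>)" .
  from DERIV_minus[OF this] show ?thesis unfolding om_def[abs_def] .
qed

lemma om_cont[continuous_intros]: "continuous_on S om"
  by (intro continuous_at_imp_continuous_on ballI DERIV_isCont[OF om_deriv])

lemma l1_cont[continuous_intros]: "continuous_on S l1"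
  unfolding l1_def[abs_def] by (intro continuous_intros)
lemma l2_cont[continuous_intros]: "continuous_on S l2"
  unfolding l2_def[abs_def] by (intro continuous_intros)
lemma invd_cont[continuous_intros]: "continuous_on S (\<lambda>\<theta>. 1 / (l1 \<theta> - l2 \<theta>))"
  by (intro continuous_intros) (simp add: l1_ne_l2)

lemma v1_cont1: "continuous_on S (\<lambda>\<theta>. fst (v1 u \<theta>))"
  unfolding v1_def sc_def addv_def Uh_def by (simp; intro continuous_intros; simp add: l1_ne_l2)
lemma v1_cont2: "continuous_on S (\<lambda>\<theta>. snd (v1 u \<theta>))"
  unfolding v1_def sc_def addv_def Uh_def by (simp; intro continuous_intros; simp add: l1_ne_l2)
lemma v2_cont1: "continuous_on S (\<lambda>\<theta>. fst (v2 u \<theta>))"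
  unfolding v2_def sc_def addv_def by (simp; intro continuous_intros v1_cont1; simp add: l1_ne_l2)
lemma v2_cont2: "continuous_on S (\<lambda>\<theta>. snd (v2 u \<theta>))"
  unfolding v2_def sc_def addv_def by (simp; intro continuous_intros v1_cont2; simp add: l1_ne_l2)

lemma ip_addv_sc: "ip (addv (sc a1 w1) (sc a2 w2)) (addv (sc b1 z1) (sc b2 z2)) =
   cnj a1 * b1 * ip w1 z1 + cnj a1 * b2 * ip w1 z2 + cnj a2 * b1 * ip w2 z1 + cnj a2 * b2 * ip w2 z2"
  by (simp add: ip_def addv_def sc_def algebra_simps)

lemma norm_ip_le: "cmod (ip u w) \<le> (nsq u + nsq w) / 2"
proof -
  have a: "cmod (cnj a * b) \<le> ((cmod a)\<^sup>2 + (cmod b)\<^sup>2) / 2" for a b :: complex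
  proof -
    have "0 \<le> (cmod a - cmod b)\<^sup>2" by simp
    then show ?thesis by (simp add: norm_mult power2_eq_square algebra_simps)
  qed
  have "cmod (ip u w) \<le> cmod (cnj (fst u) * fst w) + cmod (cnj (snd u) * snd w)"
    unfolding ip_def by (rule norm_triangle_ineq)
  also have "\<dots> \<le> (nsq u + nsq w) / 2" using a[of "fst u" "fst w"] a[of "snd u" "snd w"]
    by (simp add: nsq_def)
  finally show ?thesis .
qed

lemma nsq_FT: "nsq (FT \<phi> n \<theta>) = nsq \<phi>"
  using ip_FT_self[of \<phi> n \<theta>] by (simp add: ip_self)

lemma om_diff_lim:
  "(\<lambda>n. real n * (om (\<theta> + \<xi> / real n) - om \<theta>)) \<longlonglongrightarrow> \<xi> * (- cc \<theta>)"
proof (cases "\<xi> = 0")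
  case True then show ?thesis by simp
next
  case False
  have d: "((\<lambda>h. (om (\<theta> + h) - om \<theta>) / h) \<longlongrightarrow> - cc \<theta>) (at 0)"
    using om_deriv[of \<theta>] unfolding DERIV_def .
  have f: "filterlim (\<lambda>n. \<xi> / real n) (at 0) sequentially"
    unfolding filterlim_at
  proof
    show "\<forall>\<^sub>F n in sequentially. \<xi> / real n \<in> UNIV \<and> \<xi> / real n \<noteq> 0"
      using eventually_gt_at_top[of "0::nat"] by eventually_elim (use False in simp)
    show "(\<lambda>n. \<xi> / real n) \<longlonglongrightarrow> 0" by (rule lim_const_over_n)
  qed
  have "(\<lambda>n. (om (\<theta> + \<xi> / real n) - om \<theta>) / (\<xi> / real n)) \<longlonglongrightarrow> - cc \<theta>"
    using filterlim_compose[OF d f] .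
  then have "(\<lambda>n. \<xi> * ((om (\<theta> + \<xi> / real n) - om \<theta>) / (\<xi> / real n))) \<longlonglongrightarrow> \<xi> * (- cc \<theta>)"
    by (intro tendsto_intros)
  then show ?thesis
  proof (rule Lim_transform_eventually)
    show "\<forall>\<^sub>F n in sequentially. \<xi> * ((om (\<theta> + \<xi> / real n) - om \<theta>) / (\<xi> / real n)) =
       real n * (om (\<theta> + \<xi> / real n) - om \<theta>)"
      using eventually_gt_at_top[of "0::nat"] by eventually_elim (use False in \<open>simp add: field_simps\<close>)
  qed
qed

lemma l1_pow: "cnj (l1 \<theta>) ^ n * l1 \<theta>' ^ n = iexp (real n * (om \<theta>' - om \<theta>))"
proof -
  have "cnj (l1 \<theta>) * l1 \<theta>' = iexp (- om \<theta>) * iexp (om \<theta>')"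
    unfolding cnj_l1 by (simp add: l2_def l1_def)
  also have "\<dots> = iexp (om \<theta>' - om \<theta>)" by (subst iexp_add[symmetric]) simp
  finally have "cnj (l1 \<theta>) * l1 \<theta>' = iexp (om \<theta>' - om \<theta>)" .
  then have "cnj (l1 \<theta>) ^ n * l1 \<theta>' ^ n = iexp (om \<theta>' - om \<theta>) ^ n"
    by (simp flip: power_mult_distrib)
  also have "\<dots> = iexp (real n * (om \<theta>' - om \<theta>))"
    by (simp flip: exp_of_nat_mult add: algebra_simps)
  finally show ?thesis .
qed

lemma l2_pow: "cnj (l2 \<theta>) ^ n * l2 \<theta>' ^ n = iexp (- (real n * (om \<theta>' - om \<theta>)))"
proof -
  have "cnj (l2 \<theta>) * l2 \<theta>' = iexp (om \<theta>) * iexp (- om \<theta>')"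
    unfolding cnj_l2 by (simp add: l2_def l1_def)
  also have "\<dots> = iexp (- (om \<theta>' - om \<theta>))" by (subst iexp_add[symmetric]) simp
  finally have "cnj (l2 \<theta>) * l2 \<theta>' = iexp (- (om \<theta>' - om \<theta>))" .
  then have "cnj (l2 \<theta>) ^ n * l2 \<theta>' ^ n = iexp (- (om \<theta>' - om \<theta>)) ^ n"
    by (simp flip: power_mult_distrib)
  also have "\<dots> = iexp (- (real n * (om \<theta>' - om \<theta>)))"
    by (simp flip: exp_of_nat_mult add: algebra_simps)
  finally show ?thesis .
qed

lemma isCont_v:
  "isCont (\<lambda>\<theta>. fst (v1 u \<theta>)) \<theta>" "isCont (\<lambda>\<theta>. snd (v1 u \<theta>)) \<theta>"
  "isCont (\<lambda>\<theta>. fst (v2 u \<theta>)) \<theta>" "isCont (\<lambda>\<theta>. snd (v2 u \<theta>)) \<theta>"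
  using v1_cont1[of UNIV u] v1_cont2[of UNIV u] v2_cont1[of UNIV u] v2_cont2[of UNIV u]
  by (simp_all add: continuous_on_eq_continuous_at)

lemma ip_tendsto:
  assumes "isCont (\<lambda>\<theta>. fst (w \<theta>)) \<theta>0" "isCont (\<lambda>\<theta>. snd (w \<theta>)) \<theta>0"
  assumes "\<theta>s \<longlonglongrightarrow> \<theta>0"
  shows "(\<lambda>n. ip z (w (\<theta>s n))) \<longlonglongrightarrow> ip z (w \<theta>0)"
proof -
  have 1: "(\<lambda>n. fst (w (\<theta>s n))) \<longlonglongrightarrow> fst (w \<theta>0)"
    using isCont_tendsto_compose[OF assms(1) assms(3)] by simp
  have 2: "(\<lambda>n. snd (w (\<theta>s n))) \<longlonglongrightarrow> snd (w \<theta>0)"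
    using isCont_tendsto_compose[OF assms(2) assms(3)] by simp
  show ?thesis unfolding ip_def by (intro tendsto_intros 1 2)
qed

definition gL :: "complex \<times> complex \<Rightarrow> real \<Rightarrow> real \<Rightarrow> complex" where
  "gL \<phi> \<xi> \<theta> = complex_of_real (nsq (v1 \<phi> \<theta>)) * iexp (- \<xi> * cc \<theta>)
             + complex_of_real (nsq (v2 \<phi> \<theta>)) * iexp (\<xi> * cc \<theta>)"

lemma pointwise_lim:
  "(\<lambda>n. ip (FT \<phi> n \<theta>) (FT \<phi> n (\<theta> + \<xi> / real n))) \<longlonglongrightarrow> gL \<phi> \<xi> \<theta>"
proof -
  let ?t = "\<lambda>n::nat. \<theta> + \<xi> / real n"
  have tl: "?t \<longlonglongrightarrow> \<theta>"
    using tendsto_add[OF tendsto_const lim_const_over_n[of \<xi>]] by simp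
  have i11: "(\<lambda>n. ip (v1 \<phi> \<theta>) (v1 \<phi> (?t n))) \<longlonglongrightarrow> complex_of_real (nsq (v1 \<phi> \<theta>))"
    using ip_tendsto[OF isCont_v(1)[where u=\<phi> and \<theta>=\<theta>] isCont_v(2)[where u=\<phi> and \<theta>=\<theta>] tl, of "v1 \<phi> \<theta>"] by (simp add: ip_self)
  have i22: "(\<lambda>n. ip (v2 \<phi> \<theta>) (v2 \<phi> (?t n))) \<longlonglongrightarrow> complex_of_real (nsq (v2 \<phi> \<theta>))"
    using ip_tendsto[OF isCont_v(3)[where u=\<phi> and \<theta>=\<theta>] isCont_v(4)[where u=\<phi> and \<theta>=\<theta>] tl, of "v2 \<phi> \<theta>"] by (simp add: ip_self)
  have i12: "(\<lambda>n. ip (v1 \<phi> \<theta>) (v2 \<phi> (?t n))) \<longlonglongrightarrow> 0"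
    using ip_tendsto[OF isCont_v(3)[where u=\<phi> and \<theta>=\<theta>] isCont_v(4)[where u=\<phi> and \<theta>=\<theta>] tl, of "v1 \<phi> \<theta>"] by (simp add: ip_v1_v2)
  have i21: "(\<lambda>n. ip (v2 \<phi> \<theta>) (v1 \<phi> (?t n))) \<longlonglongrightarrow> 0"
  proof -
    have "ip (v2 \<phi> \<theta>) (v1 \<phi> \<theta>) = cnj (ip (v1 \<phi> \<theta>) (v2 \<phi> \<theta>))" by (simp add: ip_def)
    then show ?thesis using ip_tendsto[OF isCont_v(1)[where u=\<phi> and \<theta>=\<theta>] isCont_v(2)[where u=\<phi> and \<theta>=\<theta>] tl, of "v2 \<phi> \<theta>"] by (simp add: ip_v1_v2)
  qed
  have e1: "(\<lambda>n. iexp (real n * (om (?t n) - om \<theta>))) \<longlonglongrightarrow> iexp (\<xi> * (- cc \<theta>))"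
    using isCont_tendsto_compose[OF isCont_iexp om_diff_lim] .
  have e2: "(\<lambda>n. iexp (- (real n * (om (?t n) - om \<theta>)))) \<longlonglongrightarrow> iexp (- (\<xi> * (- cc \<theta>)))"
    using isCont_tendsto_compose[OF isCont_iexp tendsto_minus[OF om_diff_lim]] .
  have z12: "(\<lambda>n. cnj (l1 \<theta>) ^ n * l2 (?t n) ^ n * ip (v1 \<phi> \<theta>) (v2 \<phi> (?t n))) \<longlonglongrightarrow> 0"
  proof (rule tendsto_norm_zero_cancel)
    have "norm (cnj (l1 \<theta>) ^ n * l2 (?t n) ^ n * ip (v1 \<phi> \<theta>) (v2 \<phi> (?t n))) = norm (ip (v1 \<phi> \<theta>) (v2 \<phi> (?t n)))" for n
      by (simp add: norm_mult norm_power norm_l1 norm_l2)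
    then show "(\<lambda>n. norm (cnj (l1 \<theta>) ^ n * l2 (?t n) ^ n * ip (v1 \<phi> \<theta>) (v2 \<phi> (?t n)))) \<longlonglongrightarrow> 0"
      using tendsto_norm_zero[OF i12] by simp
  qed
  have z21: "(\<lambda>n. cnj (l2 \<theta>) ^ n * l1 (?t n) ^ n * ip (v2 \<phi> \<theta>) (v1 \<phi> (?t n))) \<longlonglongrightarrow> 0"
  proof (rule tendsto_norm_zero_cancel)
    have "norm (cnj (l2 \<theta>) ^ n * l1 (?t n) ^ n * ip (v2 \<phi> \<theta>) (v1 \<phi> (?t n))) = norm (ip (v2 \<phi> \<theta>) (v1 \<phi> (?t n)))" for n
      by (simp add: norm_mult norm_power norm_l1 norm_l2)
    then show "(\<lambda>n. norm (cnj (l2 \<theta>) ^ n * l1 (?t n) ^ n * ip (v2 \<phi> \<theta>) (v1 \<phi> (?t n)))) \<longlonglongrightarrow> 0"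
      using tendsto_norm_zero[OF i21] by simp
  qed
  have "(\<lambda>n. iexp (real n * (om (?t n) - om \<theta>)) * ip (v1 \<phi> \<theta>) (v1 \<phi> (?t n))
       + cnj (l1 \<theta>) ^ n * l2 (?t n) ^ n * ip (v1 \<phi> \<theta>) (v2 \<phi> (?t n))
       + cnj (l2 \<theta>) ^ n * l1 (?t n) ^ n * ip (v2 \<phi> \<theta>) (v1 \<phi> (?t n))
       + iexp (- (real n * (om (?t n) - om \<theta>))) * ip (v2 \<phi> \<theta>) (v2 \<phi> (?t n)))
     \<longlonglongrightarrow> iexp (\<xi> * (- cc \<theta>)) * complex_of_real (nsq (v1 \<phi> \<theta>)) + 0 + 0
        + iexp (- (\<xi> * (- cc \<theta>))) * complex_of_real (nsq (v2 \<phi> \<theta>))"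
    by (intro tendsto_add tendsto_mult e1 e2 i11 i22 z12 z21)
  moreover have "ip (FT \<phi> n \<theta>) (FT \<phi> n (?t n)) =
      iexp (real n * (om (?t n) - om \<theta>)) * ip (v1 \<phi> \<theta>) (v1 \<phi> (?t n))
       + cnj (l1 \<theta>) ^ n * l2 (?t n) ^ n * ip (v1 \<phi> \<theta>) (v2 \<phi> (?t n))
       + cnj (l2 \<theta>) ^ n * l1 (?t n) ^ n * ip (v2 \<phi> \<theta>) (v1 \<phi> (?t n))
       + iexp (- (real n * (om (?t n) - om \<theta>))) * ip (v2 \<phi> \<theta>) (v2 \<phi> (?t n))" for n
    unfolding FT_repr ip_addv_sc complex_cnj_power l1_pow l2_pow ..
  moreover have "iexp (\<xi> * (- cc \<theta>)) * complex_of_real (nsq (v1 \<phi> \<theta>)) + 0 + 0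
        + iexp (- (\<xi> * (- cc \<theta>))) * complex_of_real (nsq (v2 \<phi> \<theta>)) = gL \<phi> \<xi> \<theta>"
    unfolding gL_def by (simp add: algebra_simps)
  ultimately show ?thesis by simp
qed

lemma rr_nz: "rr \<theta> \<noteq> 0" using rr_pos[of \<theta>] by linarith

lemma gL_cont: "continuous_on S (gL \<phi> \<xi>)"
proof -
  have rr_cont: "continuous_on S rr"
    unfolding rr_def[abs_def] by (intro continuous_intros)
  have cc_cont: "continuous_on S cc"
    unfolding cc_def[abs_def] by (intro continuous_intros rr_cont) (simp add: rr_nz)
  show ?thesis unfolding gL_def[abs_def] nsq_def
    by (intro continuous_intros cc_cont v1_cont1 v1_cont2 v2_cont1 v2_cont2)
qed

definition Lc :: "complex \<times> complex \<Rightarrow> real \<Rightarrow> complex" where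
  "Lc \<phi> \<xi> = integral {0..2*pi} (gL \<phi> \<xi>) / (2 * pi)"

theorem char_conv:
  "(\<lambda>n. \<Sum>k\<in>{-int n..int n}. complex_of_real (had_prob \<phi> n k) * iexp (\<xi> * (of_int k / real n)))
     \<longlonglongrightarrow> Lc \<phi> \<xi>"
proof -
  have eq: "(\<Sum>k\<in>{-int n..int n}. complex_of_real (had_prob \<phi> n k) * iexp (\<xi> * (of_int k / real n)))
     = integral {0..2*pi} (\<lambda>\<theta>. ip (FT \<phi> n \<theta>) (FT \<phi> n (\<theta> + \<xi> / real n))) / (2 * pi)" for n
  proof -
    have "(2 * pi) * (\<Sum>k\<in>{-int n..int n}. complex_of_real (had_prob \<phi> n k) * iexp (of_int k * (\<xi> / real n)))
     = integral {0..0 + 2 * pi} (\<lambda>\<theta>. ip (FT \<phi> n \<theta>) (FT \<phi> n (\<theta> + \<xi> / real n)))"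
      by (rule char_FT)
    then show ?thesis by (simp add: field_simps)
  qed
  have "(\<lambda>n. integral {0..2*pi} (\<lambda>\<theta>. ip (FT \<phi> n \<theta>) (FT \<phi> n (\<theta> + \<xi> / real n))))
      \<longlonglongrightarrow> integral {0..2*pi} (gL \<phi> \<xi>)"
  proof (rule dominated_convergence(2))
    show "(\<lambda>\<theta>. ip (FT \<phi> n \<theta>) (FT \<phi> n (\<theta> + \<xi> / real n))) integrable_on {0..2*pi}" for n
      by (intro integrable_continuous_interval ip_FT_cont continuous_intros)
    show "(\<lambda>_. nsq \<phi>) integrable_on {0..2*pi}" by (intro integrable_continuous_interval continuous_intros)
    show "norm (ip (FT \<phi> n \<theta>) (FT \<phi> n (\<theta> + \<xi> / real n))) \<le> nsq \<phi>" for n \<theta>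
      using norm_ip_le[of "FT \<phi> n \<theta>" "FT \<phi> n (\<theta> + \<xi> / real n)"] by (simp add: nsq_FT)
    show "(\<lambda>n. ip (FT \<phi> n \<theta>) (FT \<phi> n (\<theta> + \<xi> / real n))) \<longlonglongrightarrow> gL \<phi> \<xi> \<theta>" for \<theta>
      by (rule pointwise_lim)
  qed
  then have "(\<lambda>n. integral {0..2*pi} (\<lambda>\<theta>. ip (FT \<phi> n \<theta>) (FT \<phi> n (\<theta> + \<xi> / real n))) / (2 * pi))
      \<longlonglongrightarrow> Lc \<phi> \<xi>"
    unfolding Lc_def by (intro tendsto_intros) auto
  then show ?thesis unfolding eq .
qed

lemma had_prob_out: "k \<notin> {-int n..int n} \<Longrightarrow> had_prob \<phi> n k = 0"
  by (subst had_prob_eq, subst hP_out) (auto simp: nsq_def)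

lemma had_prob_nz: "had_prob \<phi> n k \<noteq> 0 \<Longrightarrow> k \<in> {-int n..int n}"
  using had_prob_out by blast

lemma nn_sum_prob: "(\<integral>\<^sup>+ k. ennreal (had_prob \<phi> n k) \<partial>count_space UNIV) = ennreal (nsq \<phi>)"
proof -
  have "(\<integral>\<^sup>+ k. ennreal (had_prob \<phi> n k) \<partial>count_space UNIV) =
     (\<integral>\<^sup>+ k. ennreal (had_prob \<phi> n k) * indicator {-int n..int n} k \<partial>count_space UNIV)"
    by (intro nn_integral_cong) (auto simp: had_prob_out split: split_indicator)
  also have "\<dots> = (\<integral>\<^sup>+ k. ennreal (had_prob \<phi> n k) \<partial>count_space {-int n..int n})"
    by (simp add: nn_integral_count_space_indicator)
  also have "\<dots> = (\<Sum>k\<in>{-int n..int n}. ennreal (had_prob \<phi> n k))"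
    by (simp add: nn_integral_count_space_finite)
  also have "\<dots> = ennreal (\<Sum>k\<in>{-int n..int n}. had_prob \<phi> n k)"
    by (rule sum_ennreal) (simp add: had_prob_nonneg)
  finally show ?thesis by (simp add: sum_prob)
qed

definition pp :: "complex \<times> complex \<Rightarrow> nat \<Rightarrow> int pmf" where
  "pp \<phi> n = embed_pmf (had_prob \<phi> n)"

lemma pmf_pp: "nsq \<phi> = 1 \<Longrightarrow> pmf (pp \<phi> n) k = had_prob \<phi> n k"
  unfolding pp_def by (rule pmf_embed_pmf) (simp_all add: had_prob_nonneg nn_sum_prob)

lemma set_pp: "nsq \<phi> = 1 \<Longrightarrow> set_pmf (pp \<phi> n) \<subseteq> {-int n..int n}"
  unfolding pp_def by (subst set_embed_pmf) (auto simp: had_prob_nonneg nn_sum_prob dest: had_prob_nz)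

definition Mn :: "complex \<times> complex \<Rightarrow> nat \<Rightarrow> real measure" where
  "Mn \<phi> n = distr (measure_pmf (pp \<phi> n)) borel (\<lambda>k. real_of_int k / real n)"

lemma Mn_rd: "real_distribution (Mn \<phi> n)"
  unfolding Mn_def
  by (auto intro!: real_distribution.intro real_distribution_axioms.intro measure_pmf.prob_space_distr)

lemma integral_Mn:
  fixes F :: "real \<Rightarrow> 'b::{banach, second_countable_topology}"
  assumes "nsq \<phi> = 1" and [measurable]: "F \<in> borel_measurable borel"
  shows "integral\<^sup>L (Mn \<phi> n) F = (\<Sum>k\<in>{-int n..int n}. had_prob \<phi> n k *\<^sub>R F (of_int k / real n))"
proof -
  have "integral\<^sup>L (Mn \<phi> n) F = integral\<^sup>L (measure_pmf (pp \<phi> n)) (\<lambda>k. F (of_int k / real n))"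
    unfolding Mn_def by (rule integral_distr) auto
  also have "\<dots> = (\<Sum>k\<in>{-int n..int n}. pmf (pp \<phi> n) k *\<^sub>R F (of_int k / real n))"
    by (rule integral_measure_pmf, simp, use set_pp[OF assms(1), of n] in blast)
  finally show ?thesis by (simp add: pmf_pp assms(1))
qed

lemma char_Mn: "nsq \<phi> = 1 \<Longrightarrow>
   char (Mn \<phi> n) \<xi> = (\<Sum>k\<in>{-int n..int n}. complex_of_real (had_prob \<phi> n k) * iexp (\<xi> * (of_int k / real n)))"
  unfolding char_def by (simp add: integral_Mn scaleR_conv_of_real)

lemma cdf_Mn: assumes "nsq \<phi> = 1" shows "cdf (Mn \<phi> n) x = had_cdf_scaled \<phi> n x"
proof -
  let ?S = "{k. real_of_int k / real n \<le> x}"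
  let ?T = "{k \<in> {-int n..int n}. real_of_int k / real n \<le> x}"
  have "cdf (Mn \<phi> n) x = measure (measure_pmf (pp \<phi> n)) ?S"
    unfolding cdf_def Mn_def by (subst measure_distr) (auto simp: vimage_def)
  also have "\<dots> = measure (measure_pmf (pp \<phi> n)) (?S \<inter> set_pmf (pp \<phi> n))"
    by (rule measure_Int_set_pmf[symmetric])
  also have "?S \<inter> set_pmf (pp \<phi> n) = ?T \<inter> set_pmf (pp \<phi> n)"
    using set_pp[OF assms, of n] by auto
  also have "measure (measure_pmf (pp \<phi> n)) (?T \<inter> set_pmf (pp \<phi> n)) = measure (measure_pmf (pp \<phi> n)) ?T"
    by (rule measure_Int_set_pmf)
  also have "\<dots> = sum (pmf (pp \<phi> n)) ?T" by (rule measure_measure_pmf_finite) (rule finite_subset[of _ "{-int n..int n}"]; auto)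
  also have "\<dots> = had_cdf_scaled \<phi> n x"
    unfolding had_cdf_scaled_def by (simp add: pmf_pp assms)
  finally show ?thesis .
qed


lemma cc_cont[continuous_intros]: "continuous_on S cc"
proof -
  have rr_cont: "continuous_on S rr"
    unfolding rr_def[abs_def] by (intro continuous_intros)
  show ?thesis
    unfolding cc_def[abs_def] by (intro continuous_intros rr_cont) (simp add: rr_nz)
qed

lemma nsq_v1_cont[continuous_intros]: "continuous_on S (\<lambda>\<theta>. nsq (v1 \<phi> \<theta>))"
  unfolding nsq_def by (intro continuous_intros v1_cont1 v1_cont2)
lemma nsq_v2_cont[continuous_intros]: "continuous_on S (\<lambda>\<theta>. nsq (v2 \<phi> \<theta>))"
  unfolding nsq_def by (intro continuous_intros v2_cont1 v2_cont2)

lemma iexp_4pi: "iexp (\<theta> + 4 * pi) = iexp \<theta>" "iexp (- (\<theta> + 4 * pi)) = iexp (- \<theta>)"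
proof -
  have "iexp (\<theta> + 4 * pi) = iexp \<theta> * exp (complex_of_real (2 * 2 * pi) * \<i>)"
    by (simp add: algebra_simps flip: exp_add)
  also have "\<dots> = iexp \<theta>" by (subst exp_integer_2pi) auto
  finally show "iexp (\<theta> + 4 * pi) = iexp \<theta>" .
  have "iexp (- (\<theta> + 4 * pi)) = iexp (- \<theta>) * exp (complex_of_real (2 * (-2) * pi) * \<i>)"
    by (simp add: algebra_simps flip: exp_add)
  also have "\<dots> = iexp (- \<theta>)" by (subst exp_integer_2pi) auto
  finally show "iexp (- (\<theta> + 4 * pi)) = iexp (- \<theta>)" .
qed

lemma sin_4pi: "sin (\<theta> + 4 * pi) = sin \<theta>" and cos_4pi: "cos (\<theta> + 4 * pi) = cos \<theta>"
proof -
  have "\<theta> + 4 * pi = \<theta> + 2 * pi + 2 * pi" by simp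
  then show "sin (\<theta> + 4 * pi) = sin \<theta>" "cos (\<theta> + 4 * pi) = cos \<theta>"
    by (simp_all only: sin_periodic cos_periodic)
qed

lemma v2_4pi: "v2 \<phi> (\<theta> + 4 * pi) = v2 \<phi> \<theta>"
proof -
  have om: "om (\<theta> + 4 * pi) = om \<theta>" by (simp only: om_def sin_4pi)
  have l: "l1 (\<theta> + 4 * pi) = l1 \<theta>" "l2 (\<theta> + 4 * pi) = l2 \<theta>"
    by (simp_all only: l1_def l2_def om)
  have u: "Uh (\<theta> + 4 * pi) = Uh \<theta>"
    by (rule ext) (simp only: Uh_def iexp_4pi)
  show ?thesis by (simp only: v2_def v1_def l u)
qed

lemma cc_4pi: "cc (\<theta> + 4 * pi) = cc \<theta>"
  by (simp only: cc_def rr_def cos_4pi)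

definition Wd :: "complex \<times> complex \<Rightarrow> real \<Rightarrow> real" where
  "Wd \<phi> \<theta> = indicator {0..2*pi} \<theta> * (nsq (v1 \<phi> \<theta>) / (2*pi))
             + indicator {4*pi..6*pi} \<theta> * (nsq (v2 \<phi> \<theta>) / (2*pi))"

definition Gm :: "real \<Rightarrow> real" where
  "Gm \<theta> = (if \<theta> \<le> 3 * pi then - cc \<theta> else cc \<theta>)"

definition nu :: "complex \<times> complex \<Rightarrow> real measure" where
  "nu \<phi> = distr (density lborel (\<lambda>\<theta>. ennreal (Wd \<phi> \<theta>))) borel Gm"

lemma cc_meas[measurable]: "cc \<in> borel_measurable borel"
  by (intro borel_measurable_continuous_onI cc_cont)
lemma nsq_v1_meas[measurable]: "(\<lambda>\<theta>. nsq (v1 \<phi> \<theta>)) \<in> borel_measurable borel"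
  by (intro borel_measurable_continuous_onI nsq_v1_cont)
lemma nsq_v2_meas[measurable]: "(\<lambda>\<theta>. nsq (v2 \<phi> \<theta>)) \<in> borel_measurable borel"
  by (intro borel_measurable_continuous_onI nsq_v2_cont)

lemma Gm_meas[measurable]: "Gm \<in> borel_measurable borel"
  unfolding Gm_def[abs_def] by measurable
lemma Wd_meas[measurable]: "(\<lambda>\<theta>. Wd \<phi> \<theta>) \<in> borel_measurable borel"
  unfolding Wd_def[abs_def] by measurable

lemma Wd_nonneg: "Wd \<phi> \<theta> \<ge> 0"
  unfolding Wd_def by (intro add_nonneg_nonneg mult_nonneg_nonneg) (auto simp: nsq_nonneg)

lemma piece:
  fixes f :: "real \<Rightarrow> 'b::euclidean_space"
  assumes "continuous_on {a..b} f"
  shows "integrable lborel (\<lambda>\<theta>. indicator {a..b} \<theta> *\<^sub>R f \<theta>)"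
    and "(LINT \<theta>|lborel. indicator {a..b} \<theta> *\<^sub>R f \<theta>) = integral {a..b} f"
proof -
  show i: "integrable lborel (\<lambda>\<theta>. indicator {a..b} \<theta> *\<^sub>R f \<theta>)"
    by (rule borel_integrable_compact) (auto intro: assms)
  show "(LINT \<theta>|lborel. indicator {a..b} \<theta> *\<^sub>R f \<theta>) = integral {a..b} f"
    using set_borel_integral_eq_integral(2)[of "{a..b}" f] i
    unfolding set_lebesgue_integral_def set_integrable_def by simp
qed

lemma Wd_decomp:
  fixes F :: "real \<Rightarrow> 'b::real_vector"
  shows "Wd \<phi> \<theta> *\<^sub>R F (Gm \<theta>) =
     indicator {0..2*pi} \<theta> *\<^sub>R ((nsq (v1 \<phi> \<theta>) / (2*pi)) *\<^sub>R F (- cc \<theta>))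
   + indicator {4*pi..6*pi} \<theta> *\<^sub>R ((nsq (v2 \<phi> \<theta>) / (2*pi)) *\<^sub>R F (cc \<theta>))"
proof -
  have p: "pi > 0" by (rule pi_gt_zero)
  show ?thesis
  proof (cases "\<theta> \<in> {0..2*pi}")
    case True
    then have "\<theta> \<notin> {4*pi..6*pi}" "\<theta> \<le> 3 * pi" using pi_gt_zero by (smt (verit) atLeastAtMost_iff)+
    then show ?thesis using True by (simp add: Wd_def Gm_def indicator_def)
  next
    case False
    show ?thesis
    proof (cases "\<theta> \<in> {4*pi..6*pi}")
      case True
      then have "\<not> \<theta> \<le> 3 * pi" using pi_gt_zero by (smt (verit) atLeastAtMost_iff)
      then show ?thesis using True False by (simp add: Wd_def Gm_def indicator_def)
    next
      case False2: False
      then show ?thesis using False by (auto simp: Wd_def Gm_def indicator_def)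
    qed
  qed
qed

lemma lint_W:
  fixes F :: "real \<Rightarrow> 'b::euclidean_space"
  assumes cF: "continuous_on UNIV F"
  shows "integrable lborel (\<lambda>\<theta>. Wd \<phi> \<theta> *\<^sub>R F (Gm \<theta>))"
    and "(LINT \<theta>|lborel. Wd \<phi> \<theta> *\<^sub>R F (Gm \<theta>)) =
          integral {0..2*pi} (\<lambda>\<theta>. (nsq (v1 \<phi> \<theta>) / (2*pi)) *\<^sub>R F (- cc \<theta>))
        + integral {0..2*pi} (\<lambda>\<theta>. (nsq (v2 \<phi> \<theta>) / (2*pi)) *\<^sub>R F (cc \<theta>))"
proof -
  let ?f1 = "\<lambda>\<theta>. (nsq (v1 \<phi> \<theta>) / (2*pi)) *\<^sub>R F (- cc \<theta>)"
  let ?f2 = "\<lambda>\<theta>. (nsq (v2 \<phi> \<theta>) / (2*pi)) *\<^sub>R F (cc \<theta>)"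
  have c1: "continuous_on S ?f1" for S
    by (intro continuous_intros continuous_on_compose2[OF cF]) auto
  have c2: "continuous_on S ?f2" for S
    by (intro continuous_intros continuous_on_compose2[OF cF]) auto
  note p1 = piece[OF c1[of "{0..2*pi}"]] and p2 = piece[OF c2[of "{4*pi..6*pi}"]]
  show "integrable lborel (\<lambda>\<theta>. Wd \<phi> \<theta> *\<^sub>R F (Gm \<theta>))"
    unfolding Wd_decomp by (intro Bochner_Integration.integrable_add p1(1) p2(1))
  have "(LINT \<theta>|lborel. Wd \<phi> \<theta> *\<^sub>R F (Gm \<theta>)) = integral {0..2*pi} ?f1 + integral {4*pi..6*pi} ?f2"
    unfolding Wd_decomp
    by (subst Bochner_Integration.integral_add[OF p1(1) p2(1)]) (simp only: p1(2) p2(2))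
  also have "integral {4*pi..6*pi} ?f2 = integral {0..2*pi} (?f2 \<circ> (+) (4*pi))"
    using integral_shift_Icc_real[of 0 "2*pi" ?f2 "4*pi"] by simp
  also have "?f2 \<circ> (+) (4*pi) = ?f2"
    by (rule ext) (simp add: add.commute[of "4*pi"] v2_4pi cc_4pi)
  finally show "(LINT \<theta>|lborel. Wd \<phi> \<theta> *\<^sub>R F (Gm \<theta>)) = integral {0..2*pi} ?f1 + integral {0..2*pi} ?f2" .
qed

lemma nu_integral:
  fixes F :: "real \<Rightarrow> 'b::euclidean_space"
  assumes cF: "continuous_on UNIV F"
  shows "integrable (nu \<phi>) F"
    and "integral\<^sup>L (nu \<phi>) F =
          integral {0..2*pi} (\<lambda>\<theta>. (nsq (v1 \<phi> \<theta>) / (2*pi)) *\<^sub>R F (- cc \<theta>))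
        + integral {0..2*pi} (\<lambda>\<theta>. (nsq (v2 \<phi> \<theta>) / (2*pi)) *\<^sub>R F (cc \<theta>))"
proof -
  have mF[measurable]: "F \<in> borel_measurable borel" by (rule borel_measurable_continuous_onI[OF cF])
  show "integrable (nu \<phi>) F"
    unfolding nu_def
    by (subst integrable_distr_eq, simp, simp, subst integrable_density, simp, simp,
        simp add: Wd_nonneg, rule lint_W(1)[OF cF])
  have "integral\<^sup>L (nu \<phi>) F = (LINT \<theta>|lborel. Wd \<phi> \<theta> *\<^sub>R F (Gm \<theta>))"
    unfolding nu_def
    by (subst integral_distr, simp, simp, subst integral_density, simp, simp, simp add: Wd_nonneg, rule refl)
  then show "integral\<^sup>L (nu \<phi>) F =
          integral {0..2*pi} (\<lambda>\<theta>. (nsq (v1 \<phi> \<theta>) / (2*pi)) *\<^sub>R F (- cc \<theta>))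
        + integral {0..2*pi} (\<lambda>\<theta>. (nsq (v2 \<phi> \<theta>) / (2*pi)) *\<^sub>R F (cc \<theta>))"
    using lint_W(2)[OF cF] by simp
qed

lemma nu_rd: assumes "nsq \<phi> = 1" shows "real_distribution (nu \<phi>)"
proof -
  have one: "continuous_on UNIV (\<lambda>_::real. 1::real)" by simp
  have "emeasure (nu \<phi>) (space (nu \<phi>)) = (\<integral>\<^sup>+ \<theta>. ennreal (Wd \<phi> \<theta>) \<partial>lborel)"
    unfolding nu_def by (subst emeasure_distr) (simp_all add: emeasure_density)
  also have "\<dots> = ennreal (LINT \<theta>|lborel. Wd \<phi> \<theta> *\<^sub>R (\<lambda>_. 1::real) (Gm \<theta>))"
    using lint_W(1)[OF one, of \<phi>] by (subst nn_integral_eq_integral) (simp_all add: Wd_nonneg)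
  also have "(LINT \<theta>|lborel. Wd \<phi> \<theta> *\<^sub>R (\<lambda>_. 1::real) (Gm \<theta>)) = 1"
  proof -
    have "(LINT \<theta>|lborel. Wd \<phi> \<theta> *\<^sub>R (\<lambda>_. 1::real) (Gm \<theta>)) =
         integral {0..2*pi} (\<lambda>\<theta>. nsq (v1 \<phi> \<theta>) / (2*pi)) + integral {0..2*pi} (\<lambda>\<theta>. nsq (v2 \<phi> \<theta>) / (2*pi))"
      using lint_W(2)[OF one, of \<phi>] by simp
    also have "\<dots> = integral {0..2*pi} (\<lambda>\<theta>. nsq (v1 \<phi> \<theta>) / (2*pi) + nsq (v2 \<phi> \<theta>) / (2*pi))"
      by (rule integral_add[symmetric]; intro integrable_continuous_interval continuous_intros; simp)
    also have "\<dots> = integral {0..2*pi} (\<lambda>\<theta>. 1 / (2*pi))"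
      using nsq_v1_v2[of \<phi>] assms by (simp add: add_divide_distrib[symmetric])
    also have "\<dots> = 1" by simp
    finally show ?thesis .
  qed
  finally have "emeasure (nu \<phi>) (space (nu \<phi>)) = 1" by simp
  then show ?thesis
    by (intro real_distribution.intro real_distribution_axioms.intro prob_spaceI) (simp_all add: nu_def)
qed

lemma char_nu: assumes "nsq \<phi> = 1" shows "char (nu \<phi>) t = Lc \<phi> t"
proof -
  have cF: "continuous_on UNIV (\<lambda>x. iexp (t * x))" by (intro continuous_intros)
  let ?f1 = "\<lambda>\<theta>. (nsq (v1 \<phi> \<theta>) / (2*pi)) *\<^sub>R iexp (t * - cc \<theta>)"
  let ?f2 = "\<lambda>\<theta>. (nsq (v2 \<phi> \<theta>) / (2*pi)) *\<^sub>R iexp (t * cc \<theta>)"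
  have "char (nu \<phi>) t = integral {0..2*pi} ?f1 + integral {0..2*pi} ?f2"
    unfolding char_def using nu_integral(2)[OF cF, of \<phi>] by simp
  also have "\<dots> = integral {0..2*pi} (\<lambda>\<theta>. ?f1 \<theta> + ?f2 \<theta>)"
    by (rule integral_add[symmetric]; intro integrable_continuous_interval continuous_intros; simp)
  also have "(\<lambda>\<theta>. ?f1 \<theta> + ?f2 \<theta>) = (\<lambda>\<theta>. (1 / (2*pi)) *\<^sub>R gL \<phi> t \<theta>)"
    by (rule ext) (simp add: gL_def scaleR_conv_of_real algebra_simps)
  also have "integral {0..2*pi} \<dots> = (1 / (2*pi)) *\<^sub>R integral {0..2*pi} (gL \<phi> t)"
    by (rule integral_cmul)
  also have "\<dots> = Lc \<phi> t" unfolding Lc_def by (simp add: scaleR_conv_of_real)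
  finally show ?thesis .
qed

theorem weak_conv_gen: assumes "nsq \<phi> = 1" shows "weak_conv_m (Mn \<phi>) (nu \<phi>)"
proof (rule levy_continuity)
  show "real_distribution (Mn \<phi> n)" for n by (rule Mn_rd)
  show "real_distribution (nu \<phi>)" by (rule nu_rd[OF assms])
  show "(\<lambda>n. char (Mn \<phi> n) t) \<longlonglongrightarrow> char (nu \<phi>) t" for t
    unfolding char_Mn[OF assms] char_nu[OF assms] by (rule char_conv)
qed

definition clampf :: "real \<Rightarrow> real" where "clampf x = max (-1) (min 1 x)"

lemma clampf_cont: "isCont clampf x"
  unfolding clampf_def[abs_def] by (intro continuous_intros)
lemma clampf_cont_on: "continuous_on S clampf"
  unfolding clampf_def[abs_def] by (intro continuous_intros)
lemma clampf_id: "\<bar>x\<bar> \<le> 1 \<Longrightarrow> clampf x = x"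
  unfolding clampf_def by auto
lemma clampf_bound: "norm (clampf x) \<le> 1"
  unfolding clampf_def by auto

lemma abs_cc_le: "\<bar>cc \<theta>\<bar> \<le> 1"
proof -
  have "\<bar>cos \<theta>\<bar> \<le> rr \<theta>" unfolding rr_def
    by (rule real_le_rsqrt) simp
  then show ?thesis unfolding cc_def using rr_pos[of \<theta>] by (simp add: abs_div)
qed

lemma abs_kn: "k \<in> {-int n..int n} \<Longrightarrow> \<bar>real_of_int k / real n\<bar> \<le> 1"
  by (cases "n = 0") (auto simp: abs_div divide_le_eq_1)

definition m1 :: "complex \<times> complex \<Rightarrow> nat \<Rightarrow> real" where
  "m1 \<phi> n = (\<Sum>k\<in>{-int n..int n}. had_prob \<phi> n k * (of_int k / real n))"
definition m2 :: "complex \<times> complex \<Rightarrow> nat \<Rightarrow> real" where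
  "m2 \<phi> n = (\<Sum>k\<in>{-int n..int n}. had_prob \<phi> n k * (of_int k / real n)\<^sup>2)"

lemma int_Mn_clamp: assumes "nsq \<phi> = 1"
  shows "integral\<^sup>L (Mn \<phi> n) clampf = m1 \<phi> n"
    and "integral\<^sup>L (Mn \<phi> n) (\<lambda>x. (clampf x)\<^sup>2) = m2 \<phi> n"
proof -
  have mc: "clampf \<in> borel_measurable borel"
    by (intro borel_measurable_continuous_onI clampf_cont_on)
  have mc2: "(\<lambda>x. (clampf x)\<^sup>2) \<in> borel_measurable borel"
    by (intro borel_measurable_continuous_onI continuous_intros clampf_cont_on)
  show "integral\<^sup>L (Mn \<phi> n) clampf = m1 \<phi> n"
    unfolding integral_Mn[OF assms mc] m1_def
    by (intro sum.cong refl) (simp add: clampf_id[OF abs_kn])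
  show "integral\<^sup>L (Mn \<phi> n) (\<lambda>x. (clampf x)\<^sup>2) = m2 \<phi> n"
    unfolding integral_Mn[OF assms mc2] m2_def
    by (intro sum.cong refl) (simp add: clampf_id[OF abs_kn])
qed

lemma E_m1: "had_E \<phi> n / real n = m1 \<phi> n"
  unfolding had_E_def m1_def sum_divide_distrib by (simp add: algebra_simps)

lemma sd_m: assumes "nsq \<phi> = 1"
  shows "had_sd \<phi> n / real n = sqrt (m2 \<phi> n - (m1 \<phi> n)\<^sup>2)"
proof (cases "n = 0")
  case True
  then show ?thesis by (simp add: had_sd_def had_Var_def had_E_def m1_def m2_def)
next
  case False
  let ?S = "{-int n..int n}"
  let ?E = "had_E \<phi> n"
  have sp: "(\<Sum>k\<in>?S. had_prob \<phi> n k) = 1" using sum_prob assms by simp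
  have "had_Var \<phi> n = (\<Sum>k\<in>?S. had_prob \<phi> n k * (of_int k)\<^sup>2) - 2 * ?E * ?E + ?E\<^sup>2 * (\<Sum>k\<in>?S. had_prob \<phi> n k)"
    unfolding had_Var_def had_E_def[symmetric]
    by (simp add: power2_diff algebra_simps sum.distrib sum_subtractf sum_distrib_left sum_distrib_right had_E_def)
  also have "\<dots> = (\<Sum>k\<in>?S. had_prob \<phi> n k * (of_int k)\<^sup>2) - ?E\<^sup>2" unfolding sp by (simp add: power2_eq_square)
  finally have v: "had_Var \<phi> n = (\<Sum>k\<in>?S. had_prob \<phi> n k * (of_int k)\<^sup>2) - ?E\<^sup>2" .
  have "had_Var \<phi> n / (real n)\<^sup>2 = m2 \<phi> n - (m1 \<phi> n)\<^sup>2"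
    unfolding v m2_def E_m1[symmetric] using False
    by (simp add: diff_divide_distrib sum_divide_distrib power_divide algebra_simps)
  moreover have "had_sd \<phi> n / real n = sqrt (had_Var \<phi> n / (real n)\<^sup>2)"
    unfolding had_sd_def by (simp add: real_sqrt_divide)
  ultimately show ?thesis by simp
qed

definition A1 :: "complex \<times> complex \<Rightarrow> real" where "A1 \<phi> = integral\<^sup>L (nu \<phi>) clampf"
definition A2 :: "complex \<times> complex \<Rightarrow> real" where "A2 \<phi> = integral\<^sup>L (nu \<phi>) (\<lambda>x. (clampf x)\<^sup>2)"

theorem moments_gen: assumes "nsq \<phi> = 1"
  shows "(\<lambda>n. had_E \<phi> n / real n) \<longlonglongrightarrow> A1 \<phi>"
    and "(\<lambda>n. had_sd \<phi> n / real n) \<longlonglongrightarrow> sqrt (A2 \<phi> - (A1 \<phi>)\<^sup>2)"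
proof -
  have l1: "(\<lambda>n. m1 \<phi> n) \<longlonglongrightarrow> A1 \<phi>"
    unfolding A1_def int_Mn_clamp(1)[OF assms, symmetric]
    by (rule weak_conv_imp_integral_bdd_continuous_conv[OF Mn_rd nu_rd[OF assms] weak_conv_gen[OF assms]
          clampf_cont clampf_bound])
  have l2: "(\<lambda>n. m2 \<phi> n) \<longlonglongrightarrow> A2 \<phi>"
    unfolding A2_def int_Mn_clamp(2)[OF assms, symmetric]
  proof (rule weak_conv_imp_integral_bdd_continuous_conv[OF Mn_rd nu_rd[OF assms] weak_conv_gen[OF assms]])
    show "isCont (\<lambda>x. (clampf x)\<^sup>2) x" for x by (intro continuous_intros clampf_cont)
    show "norm ((clampf x)\<^sup>2) \<le> 1" for x
      using clampf_bound[of x] by (simp add: abs_square_le_1)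
  qed
  show "(\<lambda>n. had_E \<phi> n / real n) \<longlonglongrightarrow> A1 \<phi>" unfolding E_m1 by (rule l1)
  show "(\<lambda>n. had_sd \<phi> n / real n) \<longlonglongrightarrow> sqrt (A2 \<phi> - (A1 \<phi>)\<^sup>2)"
    unfolding sd_m[OF assms] by (intro tendsto_intros l1 l2)
qed

lemma A_formulas: assumes "nsq \<phi> = 1"
  shows "A1 \<phi> = integral {0..2*pi} (\<lambda>\<theta>. (nsq (v2 \<phi> \<theta>) - nsq (v1 \<phi> \<theta>)) / (2*pi) * cc \<theta>)"
    and "A2 \<phi> = integral {0..2*pi} (\<lambda>\<theta>. (cc \<theta>)\<^sup>2 / (2*pi))"
proof -
  have c1: "continuous_on UNIV clampf" by (rule clampf_cont_on)
  have c2: "continuous_on UNIV (\<lambda>x. (clampf x)\<^sup>2)" by (intro continuous_intros clampf_cont_on)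
  have cm: "clampf (- cc \<theta>) = - cc \<theta>" "clampf (cc \<theta>) = cc \<theta>" for \<theta>
    using abs_cc_le[of \<theta>] by (simp_all add: clampf_id)
  have "A1 \<phi> = integral {0..2*pi} (\<lambda>\<theta>. (nsq (v1 \<phi> \<theta>) / (2*pi)) * (- cc \<theta>))
        + integral {0..2*pi} (\<lambda>\<theta>. (nsq (v2 \<phi> \<theta>) / (2*pi)) * cc \<theta>)"
    unfolding A1_def nu_integral(2)[OF c1] cm by simp
  also have "\<dots> = integral {0..2*pi} (\<lambda>\<theta>. (nsq (v1 \<phi> \<theta>) / (2*pi)) * (- cc \<theta>) + (nsq (v2 \<phi> \<theta>) / (2*pi)) * cc \<theta>)"
    by (rule integral_add[symmetric]; intro integrable_continuous_interval continuous_intros; simp)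
  also have "\<dots> = integral {0..2*pi} (\<lambda>\<theta>. (nsq (v2 \<phi> \<theta>) - nsq (v1 \<phi> \<theta>)) / (2*pi) * cc \<theta>)"
    by (simp add: algebra_simps diff_divide_distrib)
  finally show "A1 \<phi> = integral {0..2*pi} (\<lambda>\<theta>. (nsq (v2 \<phi> \<theta>) - nsq (v1 \<phi> \<theta>)) / (2*pi) * cc \<theta>)" .
  have "A2 \<phi> = integral {0..2*pi} (\<lambda>\<theta>. (nsq (v1 \<phi> \<theta>) / (2*pi)) * (cc \<theta>)\<^sup>2)
        + integral {0..2*pi} (\<lambda>\<theta>. (nsq (v2 \<phi> \<theta>) / (2*pi)) * (cc \<theta>)\<^sup>2)"
    unfolding A2_def nu_integral(2)[OF c2] cm by simp
  also have "\<dots> = integral {0..2*pi} (\<lambda>\<theta>. (nsq (v1 \<phi> \<theta>) / (2*pi)) * (cc \<theta>)\<^sup>2 + (nsq (v2 \<phi> \<theta>) / (2*pi)) * (cc \<theta>)\<^sup>2)"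
    by (rule integral_add[symmetric]; intro integrable_continuous_interval continuous_intros; simp)
  also have "\<dots> = integral {0..2*pi} (\<lambda>\<theta>. (cc \<theta>)\<^sup>2 / (2*pi))"
  proof (intro integral_cong)
    fix \<theta>
    have "nsq (v1 \<phi> \<theta>) + nsq (v2 \<phi> \<theta>) = 1" using nsq_v1_v2[of \<phi> \<theta>] assms by simp
    then show "(nsq (v1 \<phi> \<theta>) / (2*pi)) * (cc \<theta>)\<^sup>2 + (nsq (v2 \<phi> \<theta>) / (2*pi)) * (cc \<theta>)\<^sup>2 = (cc \<theta>)\<^sup>2 / (2*pi)"
      by (simp add: field_simps) (metis distrib_left mult.commute mult_1)
  qed
  finally show "A2 \<phi> = integral {0..2*pi} (\<lambda>\<theta>. (cc \<theta>)\<^sup>2 / (2*pi))" .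
qed

definition kk :: real where "kk = 1 / sqrt 2"
definition Dq :: "real \<Rightarrow> real" where "Dq \<theta> = (cos \<theta>)\<^sup>2 + kk * (sin \<theta>)\<^sup>2"
definition uq :: "real \<Rightarrow> real" where "uq \<theta> = (kk - 1) * sin \<theta> * cos \<theta> / Dq \<theta>"
definition Gq :: "real \<Rightarrow> real" where "Gq \<theta> = \<theta> + arctan (uq \<theta>)"

lemma kk_pos: "kk > 0" by (simp add: kk_def)
lemma kk_sq: "kk * kk = 1/2" by (simp add: kk_def)

lemma Dq_pos: "Dq \<theta> > 0"
proof -
  have "kk \<le> 1" by (simp add: kk_def)
  then have a: "kk * (cos \<theta>)\<^sup>2 \<le> (cos \<theta>)\<^sup>2" using kk_pos by (intro mult_left_le_one_le) auto
  have b: "kk = kk * (sin \<theta>)\<^sup>2 + kk * (cos \<theta>)\<^sup>2"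
    using sin_cos_squared_add[of \<theta>] by (metis distrib_left mult.right_neutral)
  have "Dq \<theta> \<ge> kk" unfolding Dq_def using a b by linarith
  then show ?thesis using kk_pos by simp
qed

lemma dD: "(Dq has_real_derivative (2 * kk - 2) * sin \<theta> * cos \<theta>) (at \<theta>)"
  unfolding Dq_def[abs_def] by (auto intro!: derivative_eq_intros simp: algebra_simps)

lemma du: "(uq has_real_derivative
      ((kk - 1) * ((cos \<theta>)\<^sup>2 - (sin \<theta>)\<^sup>2) * Dq \<theta> - (2 * kk - 2) * sin \<theta> * cos \<theta> * ((kk - 1) * sin \<theta> * cos \<theta>)) / (Dq \<theta> * Dq \<theta>)) (at \<theta>)"
proof -
  have D: "Dq \<theta> \<noteq> 0" using Dq_pos[of \<theta>] by simp
  have n: "((\<lambda>\<theta>. (kk - 1) * sin \<theta> * cos \<theta>) has_real_derivative (kk - 1) * ((cos \<theta>)\<^sup>2 - (sin \<theta>)\<^sup>2)) (at \<theta>)"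
    by (auto intro!: derivative_eq_intros simp: algebra_simps power2_eq_square)
  show ?thesis unfolding uq_def[abs_def]
    using DERIV_quotient[OF n dD D] by simp
qed

lemma alg:
  fixes s c k D :: real
  assumes sc: "s\<^sup>2 + c\<^sup>2 = 1" and k: "k * k = 1/2" and Dd: "D = c\<^sup>2 + k * s\<^sup>2" and Dp: "D > 0"
  shows "1 + inverse (1 + ((k - 1) * s * c / D)\<^sup>2) *
     (((k - 1) * (c\<^sup>2 - s\<^sup>2) * D - (2 * k - 2) * s * c * ((k - 1) * s * c)) / (D * D))
     = 2 * k / (1 + c\<^sup>2)"
proof -
  define N where "N = (k - 1) * (c\<^sup>2 - s\<^sup>2) * D - (2 * k - 2) * s * c * ((k - 1) * s * c)"
  define Q where "Q = D * D + ((k - 1) * s * c) * ((k - 1) * s * c)"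
  have c1: "1 + c\<^sup>2 > 0" by (simp add: add_pos_nonneg)
  have q: "Q > 0" unfolding Q_def using Dp by (simp add: add_pos_nonneg)
  have e: "1 + ((k - 1) * s * c / D)\<^sup>2 = Q / (D * D)"
    unfolding Q_def using Dp by (simp add: field_simps power2_eq_square)
  have "inverse (Q / (D * D)) * (N / (D * D)) = N / Q"
    using Dp q by (simp add: field_simps)
  then have "1 + inverse (1 + ((k - 1) * s * c / D)\<^sup>2) * (N / (D * D)) = 1 + N / Q"
    unfolding e by simp
  also have "\<dots> = 2 * k / (1 + c\<^sup>2)"
  proof -
    have "(Q + N) * (1 + c\<^sup>2) = 2 * k * Q"
      unfolding Q_def N_def Dd using sc k by algebra
    then show ?thesis using q c1 by (simp add: field_simps)
  qed
  finally show ?thesis unfolding N_def .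
qed

lemma two_kk: "2 * kk = sqrt 2"
  unfolding kk_def by (simp add: real_div_sqrt)

lemma Gq_deriv: "(Gq has_real_derivative sqrt 2 / (1 + (cos \<theta>)\<^sup>2)) (at \<theta>)"
proof -
  have "(Gq has_real_derivative 1 + inverse (1 + (uq \<theta>)\<^sup>2) *
     (((kk - 1) * ((cos \<theta>)\<^sup>2 - (sin \<theta>)\<^sup>2) * Dq \<theta> - (2 * kk - 2) * sin \<theta> * cos \<theta> * ((kk - 1) * sin \<theta> * cos \<theta>)) / (Dq \<theta> * Dq \<theta>))) (at \<theta>)"
    unfolding Gq_def[abs_def] by (intro DERIV_add DERIV_ident DERIV_chain2[OF DERIV_arctan du])
  also have "1 + inverse (1 + (uq \<theta>)\<^sup>2) *
     (((kk - 1) * ((cos \<theta>)\<^sup>2 - (sin \<theta>)\<^sup>2) * Dq \<theta> - (2 * kk - 2) * sin \<theta> * cos \<theta> * ((kk - 1) * sin \<theta> * cos \<theta>)) / (Dq \<theta> * Dq \<theta>))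
     = 2 * kk / (1 + (cos \<theta>)\<^sup>2)"
    unfolding uq_def by (rule alg[OF sin_cos_squared_add kk_sq Dq_def Dq_pos])
  finally show ?thesis unfolding two_kk .
qed

lemma int_inv: "((\<lambda>\<theta>. sqrt 2 / (1 + (cos \<theta>)\<^sup>2)) has_integral 2 * pi) {0..2*pi}"
proof -
  have "((\<lambda>\<theta>. sqrt 2 / (1 + (cos \<theta>)\<^sup>2)) has_integral Gq (2*pi) - Gq 0) {0..2*pi}"
    by (rule fundamental_theorem_of_calculus)
       (auto intro!: DERIV_subset[OF Gq_deriv] simp: has_real_derivative_iff_has_vector_derivative[symmetric])
  moreover have "Gq (2*pi) - Gq 0 = 2 * pi" by (simp add: Gq_def uq_def)
  ultimately show ?thesis by simp
qed

lemma cc_sq: "(cc \<theta>)\<^sup>2 = 1 - 1 / (1 + (cos \<theta>)\<^sup>2)"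
proof -
  have p: "1 + (cos \<theta>)\<^sup>2 > 0" by (simp add: add_pos_nonneg)
  have "(cc \<theta>)\<^sup>2 = (cos \<theta>)\<^sup>2 / (1 + (cos \<theta>)\<^sup>2)"
    unfolding cc_def power_divide rr_sq ..
  also have "\<dots> = 1 - 1 / (1 + (cos \<theta>)\<^sup>2)" using p by (simp add: field_simps)
  finally show ?thesis .
qed

lemma I_cc2: "integral {0..2*pi} (\<lambda>\<theta>. (cc \<theta>)\<^sup>2 / (2*pi)) = (2 - sqrt 2) / 2"
proof -
  have ge: "(1 - 1 / X) / (2*pi) = 1 / (2*pi) - (1 / (2 * pi * sqrt 2)) * (sqrt 2 / X)" if "X > 0" for X :: real
    using that by (simp add: diff_divide_distrib)
  have e: "(cc \<theta>)\<^sup>2 / (2*pi) = 1 / (2*pi) - (1 / (2 * pi * sqrt 2)) * (sqrt 2 / (1 + (cos \<theta>)\<^sup>2))" for \<theta>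
    unfolding cc_sq by (rule ge) (simp add: add_pos_nonneg)
  have i1: "((\<lambda>\<theta>::real. 1 / (2*pi)) has_integral 1) {0..2*pi}"
    using has_integral_const_real[of "1 / (2*pi)" 0 "2*pi"] by simp
  have i2: "((\<lambda>\<theta>. (1 / (2 * pi * sqrt 2)) * (sqrt 2 / (1 + (cos \<theta>)\<^sup>2))) has_integral (1 / (2 * pi * sqrt 2)) * (2 * pi)) {0..2*pi}"
    by (rule has_integral_mult_right[OF int_inv])
  have "((\<lambda>\<theta>. (cc \<theta>)\<^sup>2 / (2*pi)) has_integral 1 - (1 / (2 * pi * sqrt 2)) * (2 * pi)) {0..2*pi}"
    unfolding e by (rule has_integral_diff[OF i1 i2])
  moreover have "1 - (1 / (2 * pi * sqrt 2)) * (2 * pi) = (2 - sqrt 2) / 2"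
    by (simp add: field_simps)
  ultimately show ?thesis by (metis integral_unique)
qed


definition sg :: "complex \<times> complex \<Rightarrow> complex \<times> complex" where "sg u = (snd u, - fst u)"

lemma hP_sym: "hP (sg \<phi>) n k = sc ((-1) ^ n) (sg (hP \<phi> n (-k)))"
proof (induction n arbitrary: k)
  case 0 then show ?case by (simp add: hP_0 sg_def sc_def)
next
  case (Suc n)
  have e1: "- (k + 1) = - k - 1" and e2: "- (k - 1) = - k + 1" by simp_all
  have i1: "hP (sg \<phi>) n (k + 1) = sc ((-1) ^ n) (sg (hP \<phi> n (- k - 1)))"
    using Suc.IH[of "k+1"] unfolding e1 .
  have i2: "hP (sg \<phi>) n (k - 1) = sc ((-1) ^ n) (sg (hP \<phi> n (- k + 1)))"
    using Suc.IH[of "k-1"] unfolding e2 .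
  show ?case unfolding hP_Suc i1 i2
    by (simp add: sc_def sg_def algebra_simps)
qed

lemma hP_sc: "hP (sc c \<phi>) n k = sc c (hP \<phi> n k)"
  by (induction n arbitrary: k) (simp_all add: hP_0 hP_Suc sc_def algebra_simps)

lemma nsq_sc: "nsq (sc c u) = (cmod c)\<^sup>2 * nsq u"
  by (simp add: nsq_def sc_def norm_mult power_mult_distrib algebra_simps)

lemma nsq_sg: "nsq (sg u) = nsq u"
  by (simp add: nsq_def sg_def)

lemma sym_phi:
  assumes a: "cmod \<alpha> = 1 / sqrt 2" and b: "cmod \<beta> = 1 / sqrt 2"
    and o: "\<alpha> * cnj \<beta> + cnj \<alpha> * \<beta> = 0"
  shows "\<exists>c. cmod c = 1 \<and> sg (\<alpha>, \<beta>) = sc c (\<alpha>, \<beta>)"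
proof -
  have an: "\<alpha> \<noteq> 0" using a by auto
  define z where "z = \<beta> * cnj \<alpha>"
  have zc: "cnj z = - z" using o unfolding z_def by (simp add: algebra_simps add_eq_0_iff)
  have aa: "\<alpha> * cnj \<alpha> = 1/2"
  proof -
    have "\<alpha> * cnj \<alpha> = complex_of_real ((cmod \<alpha>)\<^sup>2)" by (simp only: complex_norm_square)
    then show ?thesis using a by (simp add: power_divide)
  qed
  have bb: "\<beta> * cnj \<beta> = 1/2"
  proof -
    have "\<beta> * cnj \<beta> = complex_of_real ((cmod \<beta>)\<^sup>2)" by (simp only: complex_norm_square)
    then show ?thesis using b by (simp add: power_divide)
  qed
  have "z * cnj z = (\<alpha> * cnj \<alpha>) * (\<beta> * cnj \<beta>)" unfolding z_def by (simp add: algebra_simps)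
  then have zz: "z * cnj z = 1/4" using aa bb by simp
  define c where "c = \<beta> / \<alpha>"
  have cn: "cnj \<alpha> \<noteq> 0" using an by simp
  have "c = (\<beta> * cnj \<alpha>) / (\<alpha> * cnj \<alpha>)" unfolding c_def using cn by simp
  then have c2: "c = 2 * z" unfolding aa z_def[symmetric] by simp
  have "z * z = - (z * cnj z)" unfolding zc by simp
  then have zz2: "z * z = - (1/4)" using zz by simp
  have "c * c = 4 * (z * z)" unfolding c2 by (simp add: algebra_simps)
  then have csq: "c * c = -1" unfolding zz2 by simp
  have cm: "cmod c = 1"
  proof -
    have "(cmod c)\<^sup>2 = cmod (c * c)" by (simp add: norm_mult power2_eq_square)
    then have "(cmod c)\<^sup>2 = 1" using csq by simp
    then show ?thesis using norm_ge_zero[of c] by (simp add: power2_eq_1_iff)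
  qed
  have "sg (\<alpha>, \<beta>) = sc c (\<alpha>, \<beta>)"
  proof -
    have "c * \<alpha> = \<beta>" unfolding c_def using an by simp
    moreover have "c * \<beta> = - \<alpha>"
    proof -
      have "c * \<beta> = (c * c) * \<alpha>" using \<open>c * \<alpha> = \<beta>\<close> by (simp add: mult.assoc)
      then show ?thesis using csq by simp
    qed
    ultimately show ?thesis by (simp add: sg_def sc_def)
  qed
  then show ?thesis using cm by blast
qed

lemma had_prob_symm:
  assumes "sg \<phi> = sc c \<phi>" "cmod c = 1"
  shows "had_prob \<phi> n (-k) = had_prob \<phi> n k"
proof -
  have "had_prob \<phi> n (-k) = nsq (hP (sg \<phi>) n k)"
    unfolding had_prob_eq hP_sym nsq_sc nsq_sg by (simp add: norm_power)
  also have "\<dots> = had_prob \<phi> n k"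
    unfolding assms(1) hP_sc nsq_sc assms(2) had_prob_eq by simp
  finally show ?thesis .
qed

lemma had_E_zero:
  assumes "sg \<phi> = sc c \<phi>" "cmod c = 1"
  shows "had_E \<phi> n = 0"
proof -
  let ?S = "{-int n..int n}"
  have "had_E \<phi> n = (\<Sum>k\<in>?S. real_of_int (-k) * had_prob \<phi> n (-k))"
    unfolding had_E_def
    by (rule sum.reindex_bij_witness[of _ uminus uminus]) auto
  also have "\<dots> = - had_E \<phi> n"
    unfolding had_E_def had_prob_symm[OF assms] by (simp add: sum_negf)
  finally show ?thesis by simp
qed

lemma l2_expl: "l2 \<theta> = - (complex_of_real (rr \<theta>) + \<i> * complex_of_real (sin \<theta>)) / complex_of_real (sqrt 2)"
  unfolding l2_def by (simp add: iexp_euler' cos_om sin_om complex_eq_iff)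

lemma d_expl: "l1 \<theta> - l2 \<theta> = complex_of_real (sqrt 2 * rr \<theta>)" by (rule l1_l2_diff)

lemma rr_ge_cos: "\<bar>cos \<theta>\<bar> \<le> rr \<theta>"
  unfolding rr_def by (rule real_le_rsqrt) simp

lemma key_b: "- (iexp \<theta> * hs) - l2 \<theta> = complex_of_real ((rr \<theta> - cos \<theta>) / sqrt 2)"
  by (simp add: complex_eq_iff iexp_euler hs_def l2_expl field_simps)

lemma key_c: "iexp (- \<theta>) * hs - l2 \<theta> = complex_of_real ((rr \<theta> + cos \<theta>) / sqrt 2)"
  by (simp add: complex_eq_iff iexp_euler iexp_euler' hs_def l2_expl field_simps)

lemma cmod_hs: "cmod hs = 1 / sqrt 2" unfolding hs_def norm_of_real by simp

lemma nsq_v1_b: "nsq (v1 (0, \<beta>) \<theta>) = (cmod \<beta>)\<^sup>2 * (1 - cc \<theta>) / 2"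
proof -
  have r: "rr \<theta> > 0" by (rule rr_pos)
  have f: "fst (v1 (0, \<beta>) \<theta>) = (1 / complex_of_real (sqrt 2 * rr \<theta>)) * (iexp (-\<theta>) * hs * \<beta>)"
    by (simp add: v1_def sc_def addv_def Uh_def d_expl)
  have s: "snd (v1 (0, \<beta>) \<theta>) = (1 / complex_of_real (sqrt 2 * rr \<theta>)) * ((- (iexp \<theta> * hs) - l2 \<theta>) * \<beta>)"
    by (simp add: v1_def sc_def addv_def Uh_def d_expl algebra_simps)
  have cf: "cmod (fst (v1 (0, \<beta>) \<theta>)) = cmod \<beta> / (2 * rr \<theta>)"
    unfolding f using r by (simp add: norm_mult norm_divide cmod_hs)
  have cs: "cmod (snd (v1 (0, \<beta>) \<theta>)) = cmod \<beta> * (rr \<theta> - cos \<theta>) / (2 * rr \<theta>)"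
  proof -
    have "rr \<theta> - cos \<theta> \<ge> 0" using rr_ge_cos[of \<theta>] by linarith
    then show ?thesis unfolding s key_b norm_mult norm_divide norm_of_real norm_one using r
      by (simp add: field_simps)
  qed
  have "nsq (v1 (0, \<beta>) \<theta>) = (cmod \<beta>)\<^sup>2 * (1 + (rr \<theta> - cos \<theta>)\<^sup>2) / (4 * (rr \<theta>)\<^sup>2)"
    unfolding nsq_def cf cs by (simp only: power_divide power_mult_distrib) (simp add: add_divide_distrib[symmetric] distrib_left)
  also have "\<dots> = (cmod \<beta>)\<^sup>2 * (1 - cc \<theta>) / 2"
  proof -
    have h: "1 + (rr \<theta> - cos \<theta>)\<^sup>2 = 2 * rr \<theta> * (rr \<theta> - cos \<theta>)"
      using rr_sq[of \<theta>] by (simp add: power2_eq_square algebra_simps)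
    have "(cmod \<beta>)\<^sup>2 * (1 + (rr \<theta> - cos \<theta>)\<^sup>2) / (4 * (rr \<theta>)\<^sup>2)
       = (cmod \<beta>)\<^sup>2 * ((rr \<theta> - cos \<theta>) / rr \<theta>) / 2"
      unfolding h using r by (simp add: field_simps power2_eq_square)
    moreover have "1 - cc \<theta> = (rr \<theta> - cos \<theta>) / rr \<theta>" using r by (simp add: cc_def field_simps)
    ultimately show ?thesis by simp
  qed
  finally show ?thesis .
qed


lemma nsq_v1_c: "nsq (v1 (\<alpha>, 0) \<theta>) = (cmod \<alpha>)\<^sup>2 * (1 + cc \<theta>) / 2"
proof -
  have r: "rr \<theta> > 0" by (rule rr_pos)
  have f: "fst (v1 (\<alpha>, 0) \<theta>) = (1 / complex_of_real (sqrt 2 * rr \<theta>)) * ((iexp (-\<theta>) * hs - l2 \<theta>) * \<alpha>)"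
    by (simp add: v1_def sc_def addv_def Uh_def d_expl algebra_simps)
  have s: "snd (v1 (\<alpha>, 0) \<theta>) = (1 / complex_of_real (sqrt 2 * rr \<theta>)) * (iexp \<theta> * hs * \<alpha>)"
    by (simp add: v1_def sc_def addv_def Uh_def d_expl)
  have cs: "cmod (snd (v1 (\<alpha>, 0) \<theta>)) = cmod \<alpha> / (2 * rr \<theta>)"
    unfolding s using r by (simp add: norm_mult norm_divide cmod_hs)
  have cf: "cmod (fst (v1 (\<alpha>, 0) \<theta>)) = cmod \<alpha> * (rr \<theta> + cos \<theta>) / (2 * rr \<theta>)"
  proof -
    have "rr \<theta> + cos \<theta> \<ge> 0" using rr_ge_cos[of \<theta>] by linarith
    then show ?thesis unfolding f key_c norm_mult norm_divide norm_of_real norm_one using r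
      by (simp add: field_simps)
  qed
  have "nsq (v1 (\<alpha>, 0) \<theta>) = (cmod \<alpha>)\<^sup>2 * (1 + (rr \<theta> + cos \<theta>)\<^sup>2) / (4 * (rr \<theta>)\<^sup>2)"
    unfolding nsq_def cf cs by (simp only: power_divide power_mult_distrib) (simp add: add_divide_distrib[symmetric] distrib_left)
  also have "\<dots> = (cmod \<alpha>)\<^sup>2 * (1 + cc \<theta>) / 2"
  proof -
    have h: "1 + (rr \<theta> + cos \<theta>)\<^sup>2 = 2 * rr \<theta> * (rr \<theta> + cos \<theta>)"
      using rr_sq[of \<theta>] by (simp add: power2_eq_square algebra_simps)
    have "(cmod \<alpha>)\<^sup>2 * (1 + (rr \<theta> + cos \<theta>)\<^sup>2) / (4 * (rr \<theta>)\<^sup>2)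
       = (cmod \<alpha>)\<^sup>2 * ((rr \<theta> + cos \<theta>) / rr \<theta>) / 2"
      unfolding h using r by (simp add: field_simps power2_eq_square)
    moreover have "1 + cc \<theta> = (rr \<theta> + cos \<theta>) / rr \<theta>" using r by (simp add: cc_def field_simps)
    ultimately show ?thesis by simp
  qed
  finally show ?thesis .
qed

lemma nsq_pair: "nsq (a, b) = (cmod a)\<^sup>2 + (cmod b)\<^sup>2" by (simp add: nsq_def)

lemma sqrt2_sq: "sqrt 2 * sqrt 2 = (2::real)" by simp

lemma const_val: "(2 - sqrt 2) / 2 - ((2 - sqrt 2) / 2)\<^sup>2 = (sqrt 2 - 1) / 2"
  by (simp add: power2_eq_square field_simps)

theorem part_a:
  assumes a: "cmod \<alpha> = 1 / sqrt 2" and b: "cmod \<beta> = 1 / sqrt 2"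
    and o: "\<alpha> * cnj \<beta> + cnj \<alpha> * \<beta> = 0"
  shows "(\<forall>n. had_E (\<alpha>, \<beta>) n = 0) \<and>
         (\<lambda>n. had_sd (\<alpha>, \<beta>) n / real n) \<longlonglongrightarrow> sqrt ((2 - sqrt 2) / 2)"
proof -
  have n1: "nsq (\<alpha>, \<beta>) = 1" unfolding nsq_pair a b by (simp add: power_divide)
  obtain c where c: "cmod c = 1" "sg (\<alpha>, \<beta>) = sc c (\<alpha>, \<beta>)" using sym_phi[OF a b o] by blast
  have E0: "\<forall>n. had_E (\<alpha>, \<beta>) n = 0" using had_E_zero[OF c(2) c(1)] by blast
  have "(\<lambda>n. had_E (\<alpha>, \<beta>) n / real n) \<longlonglongrightarrow> A1 (\<alpha>, \<beta>)" by (rule moments_gen(1)[OF n1])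
  moreover have "(\<lambda>n. had_E (\<alpha>, \<beta>) n / real n) \<longlonglongrightarrow> 0" using E0 by simp
  ultimately have A10: "A1 (\<alpha>, \<beta>) = 0" using LIMSEQ_unique by blast
  have "(\<lambda>n. had_sd (\<alpha>, \<beta>) n / real n) \<longlonglongrightarrow> sqrt (A2 (\<alpha>, \<beta>) - (A1 (\<alpha>, \<beta>))\<^sup>2)"
    by (rule moments_gen(2)[OF n1])
  then have "(\<lambda>n. had_sd (\<alpha>, \<beta>) n / real n) \<longlonglongrightarrow> sqrt ((2 - sqrt 2) / 2)"
    unfolding A10 A_formulas(2)[OF n1] I_cc2 by simp
  with E0 show ?thesis by blast
qed

lemma cmod_iexp: "cmod (iexp t) = 1" by simp

theorem part_b_moments:
  shows "(\<lambda>n. had_E (0, iexp t) n / real n) \<longlonglongrightarrow> (2 - sqrt 2) / 2 \<and>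
         (\<lambda>n. had_sd (0, iexp t) n / real n) \<longlonglongrightarrow> sqrt ((sqrt 2 - 1) / 2)"
proof -
  let ?\<phi> = "(0::complex, iexp t)"
  have n1: "nsq ?\<phi> = 1" unfolding nsq_pair by simp
  have w: "nsq (v2 ?\<phi> \<theta>) - nsq (v1 ?\<phi> \<theta>) = cc \<theta>" for \<theta>
  proof -
    have "nsq (v1 ?\<phi> \<theta>) = (1 - cc \<theta>) / 2" unfolding nsq_v1_b by simp
    moreover have "nsq (v1 ?\<phi> \<theta>) + nsq (v2 ?\<phi> \<theta>) = 1" using nsq_v1_v2[of ?\<phi> \<theta>] n1 by simp
    ultimately show ?thesis by simp
  qed
  have A1v: "A1 ?\<phi> = (2 - sqrt 2) / 2"
    unfolding A_formulas(1)[OF n1] w I_cc2[symmetric]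
    by (rule integral_cong) (simp add: power2_eq_square)
  have A2v: "A2 ?\<phi> = (2 - sqrt 2) / 2" unfolding A_formulas(2)[OF n1] I_cc2 ..
  show ?thesis using moments_gen[OF n1] unfolding A1v A2v const_val by simp
qed

theorem part_c_moments:
  shows "(\<lambda>n. had_sd (iexp t, 0) n / real n) \<longlonglongrightarrow> sqrt ((sqrt 2 - 1) / 2)"
proof -
  let ?\<phi> = "(iexp t, 0::complex)"
  have n1: "nsq ?\<phi> = 1" unfolding nsq_pair by simp
  have w: "nsq (v2 ?\<phi> \<theta>) - nsq (v1 ?\<phi> \<theta>) = - cc \<theta>" for \<theta>
  proof -
    have "nsq (v1 ?\<phi> \<theta>) = (1 + cc \<theta>) / 2" unfolding nsq_v1_c by simp
    moreover have "nsq (v1 ?\<phi> \<theta>) + nsq (v2 ?\<phi> \<theta>) = 1" using nsq_v1_v2[of ?\<phi> \<theta>] n1 by simp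
    ultimately show ?thesis by simp
  qed
  have A1v: "A1 ?\<phi> = - ((2 - sqrt 2) / 2)"
  proof -
    have "A1 ?\<phi> = integral {0..2*pi} (\<lambda>\<theta>. - ((cc \<theta>)\<^sup>2 / (2*pi)))"
      unfolding A_formulas(1)[OF n1] w by (rule integral_cong) (simp add: power2_eq_square)
    also have "\<dots> = - integral {0..2*pi} (\<lambda>\<theta>. (cc \<theta>)\<^sup>2 / (2*pi))" by (rule integral_neg)
    finally show ?thesis unfolding I_cc2 .
  qed
  have A2v: "A2 ?\<phi> = (2 - sqrt 2) / 2" unfolding A_formulas(2)[OF n1] I_cc2 ..
  show ?thesis using moments_gen(2)[OF n1] unfolding A1v A2v by (simp add: const_val)
qed

lemma integral_refl_c: "integral {a..b} (\<lambda>x. f (c - x)) = integral {c - b..c - a} (f :: real \<Rightarrow> 'a::euclidean_space)"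
proof -
  have e: "(\<lambda>x. f (c - - x)) = (\<lambda>x. f (c + x))" by simp
  have "integral {-b..-a} (\<lambda>x. f (c + x)) = integral {a..b} (\<lambda>x. f (c - x))"
    using Henstock_Kurzweil_Integration.integral_reflect_real[of b a "\<lambda>x. f (c - x)"] unfolding e .
  then have "integral {a..b} (\<lambda>x. f (c - x)) = integral {-b..-a} (\<lambda>x. f (c + x))" ..
  also have "\<dots> = integral {-b..-a} (f \<circ> (+) c)" by (simp add: o_def)
  also have "\<dots> = integral {-b + c..-a + c} f" by (rule integral_shift_Icc_real)
  finally show ?thesis by (simp add: algebra_simps)
qed

lemma cc_pi_minus: "cc (pi - \<theta>) = - cc \<theta>"
  by (simp add: cc_def rr_def cos_diff)
lemma cc_2pi_minus: "cc (2 * pi - \<theta>) = cc \<theta>"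
  by (simp add: cc_def rr_def cos_diff)

lemma cc_0: "cc 0 = sqrt 2 / 2"
  by (simp add: cc_def rr_def real_div_sqrt)
lemma cc_pi: "cc pi = - (sqrt 2 / 2)"
  by (simp add: cc_def rr_def real_div_sqrt)

lemma rr_deriv: "(rr has_real_derivative (- (cos \<theta> * sin \<theta>) / rr \<theta>)) (at \<theta>)"
proof -
  have p: "1 + (cos \<theta>)\<^sup>2 > 0" by (simp add: add_pos_nonneg)
  have g: "((\<lambda>\<theta>. 1 + (cos \<theta>)\<^sup>2) has_real_derivative (2 * cos \<theta> * (- sin \<theta>))) (at \<theta>)"
  proof -
    have "((\<lambda>\<theta>. 1 + cos \<theta> * cos \<theta>) has_real_derivative (0 + ((- sin \<theta>) * cos \<theta> + (- sin \<theta>) * cos \<theta>))) (at \<theta>)"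
      by (intro DERIV_add DERIV_const DERIV_mult DERIV_cos)
    then show ?thesis by (simp add: power2_eq_square algebra_simps)
  qed
  have "(rr has_real_derivative inverse (sqrt (1 + (cos \<theta>)\<^sup>2)) / 2 * (2 * cos \<theta> * (- sin \<theta>))) (at \<theta>)"
    unfolding rr_def[abs_def] by (rule DERIV_chain2[OF DERIV_real_sqrt[OF p] g])
  also have "inverse (sqrt (1 + (cos \<theta>)\<^sup>2)) / 2 * (2 * cos \<theta> * (- sin \<theta>)) = - (cos \<theta> * sin \<theta>) / rr \<theta>"
    unfolding rr_def by (simp add: field_simps)
  finally show ?thesis .
qed

lemma cc_deriv: "(cc has_real_derivative (- sin \<theta> / (rr \<theta>) ^ 3)) (at \<theta>)"
proof -
  have r: "rr \<theta> \<noteq> 0" by (rule rr_nz)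
  have "(cc has_real_derivative ((- sin \<theta>) * rr \<theta> - (- (cos \<theta> * sin \<theta>) / rr \<theta>) * cos \<theta>) / (rr \<theta> ^ Suc (Suc 0))) (at \<theta>)"
    unfolding cc_def[abs_def] by (rule DERIV_quotient[OF DERIV_cos rr_deriv r])
  also have "((- sin \<theta>) * rr \<theta> - (- (cos \<theta> * sin \<theta>) / rr \<theta>) * cos \<theta>) / (rr \<theta> ^ Suc (Suc 0)) = - sin \<theta> / (rr \<theta>) ^ 3"
  proof -
    have "(- sin \<theta>) * rr \<theta> - (- (cos \<theta> * sin \<theta>) / rr \<theta>) * cos \<theta> = - sin \<theta> * ((rr \<theta>)\<^sup>2 - (cos \<theta>)\<^sup>2) / rr \<theta>"
      using r by (simp add: field_simps power2_eq_square)
    also have "(rr \<theta>)\<^sup>2 - (cos \<theta>)\<^sup>2 = 1" by (simp add: rr_sq)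
    finally have n: "(- sin \<theta>) * rr \<theta> - (- (cos \<theta> * sin \<theta>) / rr \<theta>) * cos \<theta> = - sin \<theta> / rr \<theta>" by simp
    show ?thesis unfolding n using r by (simp add: power3_eq_cube)
  qed
  finally show ?thesis .
qed

lemma ncc_deriv: "((\<lambda>\<theta>. - cc \<theta>) has_real_derivative (sin \<theta> / (rr \<theta>) ^ 3)) (at \<theta>)"
  using DERIV_minus[OF cc_deriv[of \<theta>]] by simp

lemma alg2: "S \<noteq> 0 \<Longrightarrow> r \<noteq> 0 \<Longrightarrow> (1 / (P * (S / r))) * (S / r ^ 3) = 1 / (P * r\<^sup>2)" for S r P :: real
  by (simp add: field_simps power2_eq_square power3_eq_cube)

lemma cc_sq_lt: "sin \<theta> \<noteq> 0 \<Longrightarrow> (cc \<theta>)\<^sup>2 < 1/2"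
proof -
  assume s: "sin \<theta> \<noteq> 0"
  have "(cos \<theta>)\<^sup>2 < 1" using s sin_cos_squared_add[of \<theta>] by (smt (verit) zero_less_power2)
  then have "2 * (cos \<theta>)\<^sup>2 < 1 + (cos \<theta>)\<^sup>2" by simp
  then show ?thesis unfolding cc_def power_divide rr_sq by (simp add: add_pos_nonneg field_simps)
qed

lemma sqrt_cc: assumes "sin \<theta> > 0" shows "sqrt (1 - 2 * (cc \<theta>)\<^sup>2) = sin \<theta> / rr \<theta>"
proof -
  have r: "rr \<theta> > 0" by (rule rr_pos)
  have "1 - 2 * (cc \<theta>)\<^sup>2 = (sin \<theta> / rr \<theta>)\<^sup>2"
  proof -
    have "1 - 2 * (cc \<theta>)\<^sup>2 = ((rr \<theta>)\<^sup>2 - 2 * (cos \<theta>)\<^sup>2) / (rr \<theta>)\<^sup>2"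
      unfolding cc_def using r by (simp add: field_simps power2_eq_square)
    also have "(rr \<theta>)\<^sup>2 - 2 * (cos \<theta>)\<^sup>2 = (sin \<theta>)\<^sup>2"
      unfolding rr_sq using sin_cos_squared_add[of \<theta>] by linarith
    finally show ?thesis by (simp add: power_divide)
  qed
  then show ?thesis using assms r by simp
qed

definition fD :: "real \<Rightarrow> real \<Rightarrow> real" where
  "fD \<kappa> x = 1 / (pi * (1 - \<kappa> * x) * sqrt (1 - 2 * x\<^sup>2))"

lemma key_fD:
  assumes k: "\<kappa> = 1 \<or> \<kappa> = -1" and s: "sin \<theta> > 0"
  shows "fD \<kappa> (- cc \<theta>) * (sin \<theta> / (rr \<theta>) ^ 3) = (1 - \<kappa> * cc \<theta>) / pi"
proof -
  have r: "rr \<theta> > 0" by (rule rr_pos)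
  have c2: "(cc \<theta>)\<^sup>2 < 1/2" using cc_sq_lt s by simp
  have kc: "(\<kappa> * cc \<theta>)\<^sup>2 < 1" using k c2 by auto
  have p1: "1 + \<kappa> * cc \<theta> > 0"
  proof -
    have "\<bar>\<kappa> * cc \<theta>\<bar> < 1" using kc by (simp add: abs_square_less_1)
    then show ?thesis by linarith
  qed
  have id: "(1 + \<kappa> * cc \<theta>) * (1 - \<kappa> * cc \<theta>) * (rr \<theta>)\<^sup>2 = 1"
  proof -
    have "(1 + \<kappa> * cc \<theta>) * (1 - \<kappa> * cc \<theta>) = 1 - (cc \<theta>)\<^sup>2"
      using k by (auto simp: algebra_simps power2_eq_square)
    also have "(1 - (cc \<theta>)\<^sup>2) * (rr \<theta>)\<^sup>2 = 1"
    proof -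
      have q: "1 + (cos \<theta>)\<^sup>2 > 0" by (simp add: add_pos_nonneg)
      show ?thesis unfolding cc_def power_divide rr_sq using q by (simp add: field_simps)
    qed
    finally show ?thesis .
  qed
  have sn: "sin \<theta> \<noteq> 0" and rn: "rr \<theta> \<noteq> 0" and pn: "1 + \<kappa> * cc \<theta> \<noteq> 0" and pin: "pi \<noteq> 0"
    using s r p1 by auto
  have "fD \<kappa> (- cc \<theta>) = 1 / (pi * (1 + \<kappa> * cc \<theta>) * (sin \<theta> / rr \<theta>))"
    unfolding fD_def power2_minus sqrt_cc[OF s] by simp
  then have "fD \<kappa> (- cc \<theta>) * (sin \<theta> / (rr \<theta>) ^ 3) = 1 / (pi * (1 + \<kappa> * cc \<theta>) * (rr \<theta>)\<^sup>2)"
    using alg2[OF sn rn, of "pi * (1 + \<kappa> * cc \<theta>)"] by (simp add: mult.assoc)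
  also have "\<dots> = (1 - \<kappa> * cc \<theta>) / pi"
  proof -
    have q: "(1 + \<kappa> * cc \<theta>) * (rr \<theta>)\<^sup>2 \<noteq> 0" using p1 r by simp
    have "1 - \<kappa> * cc \<theta> = 1 / ((1 + \<kappa> * cc \<theta>) * (rr \<theta>)\<^sup>2)"
      using id q by (simp add: eq_divide_eq mult.commute mult.left_commute)
    then show ?thesis by (simp add: mult.assoc)
  qed
  finally show ?thesis .
qed

definition DD :: "real \<Rightarrow> real measure" where
  "DD \<kappa> = density lborel (\<lambda>x. indicator {- sqrt 2 / 2 <..< sqrt 2 / 2} x * ennreal (fD \<kappa> x))"
definition wq :: "real \<Rightarrow> real \<Rightarrow> real" where
  "wq \<kappa> \<theta> = indicator {0<..<pi} \<theta> * ((1 - \<kappa> * cc \<theta>) / pi)"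
definition QQ :: "real \<Rightarrow> real measure" where
  "QQ \<kappa> = distr (density lborel (\<lambda>\<theta>. ennreal (wq \<kappa> \<theta>))) borel (\<lambda>\<theta>. - cc \<theta>)"

lemma fD_meas[measurable]: "fD \<kappa> \<in> borel_measurable borel"
  unfolding fD_def[abs_def] by measurable

lemma wq_meas[measurable]: "wq \<kappa> \<in> borel_measurable borel"
  unfolding wq_def[abs_def] by measurable

lemma wq_nonneg: assumes "\<kappa> = 1 \<or> \<kappa> = -1" shows "wq \<kappa> \<theta> \<ge> 0"
proof -
  have "\<bar>\<kappa> * cc \<theta>\<bar> \<le> 1" using assms abs_cc_le[of \<theta>] by auto
  then have "1 - \<kappa> * cc \<theta> \<ge> 0" by linarith
  then show ?thesis unfolding wq_def by simp
qed

lemma fD_pos: assumes k: "\<kappa> = 1 \<or> \<kappa> = -1" and x: "x \<in> {- sqrt 2 / 2 <..< sqrt 2 / 2}"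
  shows "fD \<kappa> x > 0"
proof -
  have ax: "\<bar>x\<bar> < sqrt 2 / 2" using x by auto
  have "\<bar>x\<bar>\<^sup>2 < (sqrt 2 / 2)\<^sup>2" by (rule power_strict_mono[OF ax]) auto
  then have x2: "x\<^sup>2 < 1/2" by (simp add: power_divide)
  then have "\<bar>x\<bar> < 1" by (simp add: abs_square_less_1[symmetric])
  then have a: "1 - \<kappa> * x > 0" using k by auto
  have b: "sqrt (1 - 2 * x\<^sup>2) > 0" using x2 by simp
  show ?thesis unfolding fD_def using a b by simp
qed

lemma ind_open: "x \<in> {- sqrt 2 / 2 <..< sqrt 2 / 2} \<longleftrightarrow> \<bar>x\<bar> < sqrt 2 / 2" by auto

lemma ncc_in: assumes "0 < \<theta>" "\<theta> < pi" shows "- cc \<theta> \<in> {- sqrt 2 / 2 <..< sqrt 2 / 2}"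
proof -
  have s: "sin \<theta> > 0" using assms by (simp add: sin_gt_zero)
  have "(cc \<theta>)\<^sup>2 < 1/2" using cc_sq_lt[of \<theta>] s by simp
  then have "\<bar>cc \<theta>\<bar>\<^sup>2 < (sqrt 2 / 2)\<^sup>2" by (simp add: power_divide)
  then have "\<bar>cc \<theta>\<bar> < sqrt 2 / 2" by (rule power_less_imp_less_base) simp
  then show ?thesis unfolding ind_open abs_minus_cancel .
qed

lemma g'_cont: "continuous_on S (\<lambda>\<theta>. sin \<theta> / (rr \<theta>) ^ 3)"
proof -
  have rr_cont: "continuous_on S rr" unfolding rr_def[abs_def] by (intro continuous_intros)
  show ?thesis by (intro continuous_intros rr_cont) (simp add: rr_nz)
qed

lemma DD_eq_QQ: assumes k: "\<kappa> = 1 \<or> \<kappa> = -1" shows "DD \<kappa> = QQ \<kappa>"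
proof (rule measure_eqI)
  show "sets (DD \<kappa>) = sets (QQ \<kappa>)" by (simp add: DD_def QQ_def)
  fix A assume "A \<in> sets (DD \<kappa>)"
  then have A[measurable]: "A \<in> sets borel" by (simp add: DD_def)
  define F where "F x = indicator {- sqrt 2 / 2 <..< sqrt 2 / 2} x * fD \<kappa> x * indicator A x" for x
  have Fm[measurable]: "F \<in> borel_measurable borel" unfolding F_def[abs_def] by measurable
  have g0: "- cc 0 = - sqrt 2 / 2" and gpi: "- cc pi = sqrt 2 / 2" by (simp_all add: cc_0 cc_pi)
  have "emeasure (DD \<kappa>) A = (\<integral>\<^sup>+ x. ennreal (F x * indicator {- cc 0..- cc pi} x) \<partial>lborel)"
    unfolding DD_def
  proof (subst emeasure_density, simp, simp, intro nn_integral_cong)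
    fix x
    show "indicator {- sqrt 2 / 2 <..< sqrt 2 / 2} x * ennreal (fD \<kappa> x) * indicator A x =
          ennreal (F x * indicator {- cc 0..- cc pi} x)"
    proof (cases "x \<in> {- sqrt 2 / 2 <..< sqrt 2 / 2}")
      case True
      then have "x \<in> {- cc 0..- cc pi}" unfolding g0 gpi by auto
      then show ?thesis using True fD_pos[OF k True] unfolding F_def
        by (auto simp: indicator_def)
    next
      case False
      have F0: "F x = 0" unfolding F_def using False by simp
      have I0: "indicator {- sqrt 2 / 2 <..< sqrt 2 / 2} x = (0::ennreal)" using False by simp
      show ?thesis unfolding F0 I0 by simp
    qed
  qed
  also have "\<dots> = (\<integral>\<^sup>+ \<theta>. ennreal (F (- cc \<theta>) * (sin \<theta> / (rr \<theta>) ^ 3) * indicator {0..pi} \<theta>) \<partial>lborel)"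
  proof (rule nn_integral_substitution[where g = "\<lambda>\<theta>. - cc \<theta>" and g' = "\<lambda>\<theta>. sin \<theta> / (rr \<theta>) ^ 3"])
    show "set_borel_measurable borel {- cc 0..- cc pi} F"
      unfolding set_borel_measurable_def by measurable
    show "((\<lambda>\<theta>. - cc \<theta>) has_real_derivative sin x / (rr x) ^ 3) (at x)" for x by (rule ncc_deriv)
    show "continuous_on {0..pi} (\<lambda>\<theta>. sin \<theta> / (rr \<theta>) ^ 3)" by (rule g'_cont)
    show "0 \<le> sin x / (rr x) ^ 3" if "x \<in> {0..pi}" for x
      using that rr_pos[of x] by (simp add: sin_ge_zero)
  qed simp
  also have "\<dots> = (\<integral>\<^sup>+ \<theta>. ennreal (wq \<kappa> \<theta>) * indicator ((\<lambda>\<theta>. - cc \<theta>) -` A \<inter> space lborel) \<theta> \<partial>lborel)"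
  proof (intro nn_integral_cong)
    fix \<theta>
    show "ennreal (F (- cc \<theta>) * (sin \<theta> / (rr \<theta>) ^ 3) * indicator {0..pi} \<theta>) =
          ennreal (wq \<kappa> \<theta>) * indicator ((\<lambda>\<theta>. - cc \<theta>) -` A \<inter> space lborel) \<theta>"
    proof (cases "0 < \<theta> \<and> \<theta> < pi")
      case True
      have s: "sin \<theta> > 0" using True by (simp add: sin_gt_zero)
      have i: "- cc \<theta> \<in> {- sqrt 2 / 2 <..< sqrt 2 / 2}" using True by (intro ncc_in) auto
      have "F (- cc \<theta>) * (sin \<theta> / (rr \<theta>) ^ 3) * indicator {0..pi} \<theta> = wq \<kappa> \<theta> * indicator A (- cc \<theta>)"
        unfolding F_def wq_def using True i key_fD[OF k s] by (simp add: indicator_def)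
      then show ?thesis using wq_nonneg[OF k, of \<theta>] by (simp add: indicator_def)
    next
      case False
      then have "\<theta> = 0 \<or> \<theta> = pi \<or> \<theta> \<notin> {0..pi}" by auto
      moreover have "\<not> (0 < \<theta> \<and> \<theta> < pi) \<Longrightarrow> wq \<kappa> \<theta> = 0" unfolding wq_def by simp
      moreover have "F (- cc 0) = 0" "F (- cc pi) = 0" unfolding F_def g0 gpi by simp_all
      ultimately show ?thesis using False by (auto simp: indicator_def)
    qed
  qed
  also have "\<dots> = emeasure (QQ \<kappa>) A"
  proof -
    have mg: "(\<lambda>\<theta>. - cc \<theta>) \<in> borel_measurable lborel" by measurable
    have pre: "(\<lambda>\<theta>. - cc \<theta>) -` A \<in> sets lborel"
      using measurable_sets[OF mg A] by simp
    have mw: "(\<lambda>\<theta>. ennreal (wq \<kappa> \<theta>)) \<in> borel_measurable lborel" by measurable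
    show ?thesis
      unfolding QQ_def by (subst emeasure_distr) (simp_all add: emeasure_density[OF mw pre])
  qed
  finally show "emeasure (DD \<kappa>) A = emeasure (QQ \<kappa>) A" .
qed

lemma wq_lint:
  fixes Y :: "real \<Rightarrow> 'b::euclidean_space"
  assumes cY: "continuous_on UNIV Y"
  shows "integrable lborel (\<lambda>\<theta>. wq \<kappa> \<theta> *\<^sub>R Y \<theta>)"
    and "(LINT \<theta>|lborel. wq \<kappa> \<theta> *\<^sub>R Y \<theta>) = integral {0..pi} (\<lambda>\<theta>. ((1 - \<kappa> * cc \<theta>) / pi) *\<^sub>R Y \<theta>)"
proof -
  let ?Z = "\<lambda>\<theta>. ((1 - \<kappa> * cc \<theta>) / pi) *\<^sub>R Y \<theta>"
  have cZ: "continuous_on {0..pi} ?Z"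
    by (intro continuous_intros continuous_on_subset[OF cY]) auto
  have mY[measurable]: "Y \<in> borel_measurable borel" by (rule borel_measurable_continuous_onI[OF cY])
  have ae: "AE \<theta> in lborel. indicator {0..pi} \<theta> *\<^sub>R ?Z \<theta> = wq \<kappa> \<theta> *\<^sub>R Y \<theta>"
    using AE_conjI[OF AE_lborel_singleton[of 0] AE_lborel_singleton[of pi]]
    by eventually_elim (auto simp: wq_def indicator_def)
  note p = piece[OF cZ]
  show "integrable lborel (\<lambda>\<theta>. wq \<kappa> \<theta> *\<^sub>R Y \<theta>)"
    using integrable_cong_AE[OF _ _ ae] p(1) by (simp add: wq_def)
  have "(LINT \<theta>|lborel. wq \<kappa> \<theta> *\<^sub>R Y \<theta>) = (LINT \<theta>|lborel. indicator {0..pi} \<theta> *\<^sub>R ?Z \<theta>)"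
    by (rule integral_cong_AE[OF _ _ ae[THEN AE_mp, OF AE_I2], symmetric]) (auto simp: wq_def)
  also have "\<dots> = integral {0..pi} ?Z" by (rule p(2))
  finally show "(LINT \<theta>|lborel. wq \<kappa> \<theta> *\<^sub>R Y \<theta>) = integral {0..pi} ?Z" .
qed


lemma char_QQ: assumes k: "\<kappa> = 1 \<or> \<kappa> = -1" shows "char (QQ \<kappa>) t = integral {0..pi} (\<lambda>\<theta>. ((1 - \<kappa> * cc \<theta>) / pi) *\<^sub>R iexp (t * - cc \<theta>))"
proof -
  have cY: "continuous_on UNIV (\<lambda>\<theta>. iexp (t * - cc \<theta>))" by (intro continuous_intros)
  have "char (QQ \<kappa>) t = (LINT \<theta>|lborel. wq \<kappa> \<theta> *\<^sub>R iexp (t * - cc \<theta>))"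
    unfolding char_def QQ_def
    by (subst integral_distr, simp, simp, subst integral_density, simp, simp, simp add: wq_nonneg[OF k])
      (rule refl)
  also have "\<dots> = integral {0..pi} (\<lambda>\<theta>. ((1 - \<kappa> * cc \<theta>) / pi) *\<^sub>R iexp (t * - cc \<theta>))"
    by (rule wq_lint(2)[OF cY])
  finally show ?thesis .
qed

lemma Lc_QQ:
  assumes k: "\<kappa> = 1 \<or> \<kappa> = -1" and n1: "nsq \<phi> = 1"
    and w: "\<And>\<theta>. nsq (v1 \<phi> \<theta>) = (1 - \<kappa> * cc \<theta>) / 2"
  shows "Lc \<phi> t = char (QQ \<kappa>) t"
proof -
  define H where "H y = complex_of_real ((1 - \<kappa> * y) / 2) * iexp (- t * y)" for y
  have w2: "nsq (v2 \<phi> \<theta>) = (1 + \<kappa> * cc \<theta>) / 2" for \<theta>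
  proof -
    have "(1 - \<kappa> * cc \<theta>) / 2 + nsq (v2 \<phi> \<theta>) = 1" using nsq_v1_v2[of \<phi> \<theta>] n1 w[of \<theta>] by simp
    then show ?thesis by (simp add: field_simps)
  qed
  have g: "gL \<phi> t \<theta> = H (cc \<theta>) + H (- cc \<theta>)" for \<theta>
    unfolding gL_def H_def w w2 by simp
  have cH: "continuous_on S (\<lambda>\<theta>. H (cc \<theta>))" for S unfolding H_def by (intro continuous_intros) auto
  have cH2: "continuous_on S (\<lambda>\<theta>. H (- cc \<theta>))" for S unfolding H_def by (intro continuous_intros) auto
  have cK: "continuous_on S (gL \<phi> t)" for S by (rule gL_cont)
  have "integral {0..2*pi} (gL \<phi> t) = integral {0..pi} (gL \<phi> t) + integral {pi..2*pi} (gL \<phi> t)"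
  proof -
    have ig: "gL \<phi> t integrable_on {0..2*pi}" by (intro integrable_continuous_interval cK)
    have "integral {0..pi} (gL \<phi> t) + integral {pi..2*pi} (gL \<phi> t) = integral {0..2*pi} (gL \<phi> t)"
      by (rule Henstock_Kurzweil_Integration.integral_combine) (use ig in auto)
    then show ?thesis ..
  qed
  also have "integral {pi..2*pi} (gL \<phi> t) = integral {pi..2*pi} (\<lambda>\<theta>. gL \<phi> t (2 * pi - \<theta>))"
    unfolding g cc_2pi_minus ..
  also have "\<dots> = integral {0..pi} (gL \<phi> t)"
    using integral_refl_c[of pi "2*pi" "gL \<phi> t" "2*pi"] by simp
  also have "integral {0..pi} (gL \<phi> t) = integral {0..pi} (\<lambda>\<theta>. H (cc \<theta>)) + integral {0..pi} (\<lambda>\<theta>. H (- cc \<theta>))"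
    unfolding g by (rule integral_add; intro integrable_continuous_interval cH cH2)
  also have "integral {0..pi} (\<lambda>\<theta>. H (- cc \<theta>)) = integral {0..pi} (\<lambda>\<theta>. H (cc (pi - \<theta>)))"
    unfolding cc_pi_minus ..
  also have "\<dots> = integral {0..pi} (\<lambda>\<theta>. H (cc \<theta>))"
    using integral_refl_c[of 0 pi "\<lambda>\<theta>. H (cc \<theta>)" pi] by simp
  finally have I: "integral {0..2*pi} (gL \<phi> t) = 4 * integral {0..pi} (\<lambda>\<theta>. H (cc \<theta>))" by simp
  have "char (QQ \<kappa>) t = integral {0..pi} (\<lambda>\<theta>. complex_of_real (2 / pi) * H (cc \<theta>))"
    unfolding char_QQ[OF k] H_def by (intro integral_cong) (simp add: scaleR_conv_of_real field_simps)
  also have "\<dots> = complex_of_real (2 / pi) * integral {0..pi} (\<lambda>\<theta>. H (cc \<theta>))"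
    by (rule integral_mult_right)
  also have "\<dots> = Lc \<phi> t" unfolding Lc_def I by (simp add: field_simps)
  finally show ?thesis ..
qed

lemma nu_DD:
  assumes k: "\<kappa> = 1 \<or> \<kappa> = -1" and n1: "nsq \<phi> = 1"
    and w: "\<And>\<theta>. nsq (v1 \<phi> \<theta>) = (1 - \<kappa> * cc \<theta>) / 2"
  shows "nu \<phi> = DD \<kappa>"
proof -
  have cq: "char (QQ \<kappa>) t = char (nu \<phi>) t" for t
    using Lc_QQ[OF k n1 w, of t] char_nu[OF n1, of t] by simp
  have rq: "real_distribution (QQ \<kappa>)"
  proof -
    have one: "continuous_on UNIV (\<lambda>_::real. 1::real)" by simp
    have ms: "emeasure (QQ \<kappa>) (space (QQ \<kappa>)) = (\<integral>\<^sup>+ \<theta>. ennreal (wq \<kappa> \<theta>) \<partial>lborel)"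
      unfolding QQ_def by (subst emeasure_distr) (simp_all add: emeasure_density)
    also have "\<dots> = ennreal (LINT \<theta>|lborel. wq \<kappa> \<theta>)"
      using wq_lint(1)[OF one, of \<kappa>] by (subst nn_integral_eq_integral) (simp_all add: wq_nonneg[OF k])
    also have "(LINT \<theta>|lborel. wq \<kappa> \<theta>) = 1"
    proof -
      have "char (QQ \<kappa>) 0 = (LINT \<theta>|lborel. complex_of_real (wq \<kappa> \<theta>))"
        unfolding char_def QQ_def
        by (subst integral_distr, simp, simp, subst integral_density, simp, simp, simp add: wq_nonneg[OF k])
          (simp add: scaleR_conv_of_real)
      also have "\<dots> = complex_of_real (LINT \<theta>|lborel. wq \<kappa> \<theta>)" by (rule integral_complex_of_real)
      finally have "complex_of_real (LINT \<theta>|lborel. wq \<kappa> \<theta>) = 1"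
        using cq[of 0] real_distribution.char_zero[OF nu_rd[OF n1]] by simp
      then show ?thesis by (simp add: complex_eq_iff)
    qed
    finally have "emeasure (QQ \<kappa>) (space (QQ \<kappa>)) = 1" by simp
    then show ?thesis
      by (intro real_distribution.intro real_distribution_axioms.intro prob_spaceI) (simp_all add: QQ_def)
  qed
  have "nu \<phi> = QQ \<kappa>"
    by (rule Levy_uniqueness[OF nu_rd[OF n1] rq]) (use cq in auto)
  then show ?thesis using DD_eq_QQ[OF k] by simp
qed

lemma DD1: "DD 1 = density lborel (\<lambda>x. indicator {- sqrt 2 / 2 <..< sqrt 2 / 2} x *
                 ennreal (1 / (pi * (1 - x) * sqrt (1 - 2 * x\<^sup>2))))"
  by (simp add: DD_def fD_def)
lemma DDm1: "DD (-1) = density lborel (\<lambda>x. indicator {- sqrt 2 / 2 <..< sqrt 2 / 2} x *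
                 ennreal (1 / (pi * (1 + x) * sqrt (1 - 2 * x\<^sup>2))))"
  by (simp add: DD_def fD_def)

lemma weak_b: "weak_conv (had_cdf_scaled (0, iexp t)) (cdf (DD 1))"
proof -
  let ?\<phi> = "(0::complex, iexp t)"
  have n1: "nsq ?\<phi> = 1" unfolding nsq_pair by simp
  have w: "nsq (v1 ?\<phi> \<theta>) = (1 - 1 * cc \<theta>) / 2" for \<theta> unfolding nsq_v1_b by simp
  have "weak_conv (\<lambda>n. cdf (Mn ?\<phi> n)) (cdf (nu ?\<phi>))"
    using weak_conv_gen[OF n1] unfolding weak_conv_m_def .
  moreover have "(\<lambda>n. cdf (Mn ?\<phi> n)) = had_cdf_scaled ?\<phi>"
    by (intro ext) (simp add: cdf_Mn[OF n1])
  moreover have "nu ?\<phi> = DD 1" by (rule nu_DD[OF _ n1 w]) simp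
  ultimately show ?thesis by simp
qed

lemma weak_c: "weak_conv (had_cdf_scaled (iexp t, 0)) (cdf (DD (-1)))"
proof -
  let ?\<phi> = "(iexp t, 0::complex)"
  have n1: "nsq ?\<phi> = 1" unfolding nsq_pair by simp
  have w: "nsq (v1 ?\<phi> \<theta>) = (1 - (-1) * cc \<theta>) / 2" for \<theta> unfolding nsq_v1_c by simp
  have "weak_conv (\<lambda>n. cdf (Mn ?\<phi> n)) (cdf (nu ?\<phi>))"
    using weak_conv_gen[OF n1] unfolding weak_conv_m_def .
  moreover have "(\<lambda>n. cdf (Mn ?\<phi> n)) = had_cdf_scaled ?\<phi>"
    by (intro ext) (simp add: cdf_Mn[OF n1])
  moreover have "nu ?\<phi> = DD (-1)" by (rule nu_DD[OF _ n1 w]) simp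
  ultimately show ?thesis by simp
qed

theorem mainTheorem5:
  shows "(\<forall>\<alpha> \<beta>. cmod \<alpha> = 1 / sqrt 2 \<and> cmod \<beta> = 1 / sqrt 2 \<and>
            \<alpha> * cnj \<beta> + cnj \<alpha> * \<beta> = 0 \<longrightarrow>
            (\<forall>n. had_E (\<alpha>, \<beta>) n = 0) \<and>
            (\<lambda>n. had_sd (\<alpha>, \<beta>) n / real n) \<longlonglongrightarrow> sqrt ((2 - sqrt 2) / 2))
   \<and> (\<forall>\<theta>::real. 0 \<le> \<theta> \<and> \<theta> < 2 * pi \<longrightarrow>
        weak_conv (had_cdf_scaled (0, exp (\<i> * complex_of_real \<theta>)))
          (cdf (density lborel (\<lambda>x. indicator {- sqrt 2 / 2 <..< sqrt 2 / 2} x *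
                 ennreal (1 / (pi * (1 - x) * sqrt (1 - 2 * x\<^sup>2)))))) \<and>
        (\<lambda>n. had_E (0, exp (\<i> * complex_of_real \<theta>)) n / real n) \<longlonglongrightarrow> (2 - sqrt 2) / 2 \<and>
        (\<lambda>n. had_sd (0, exp (\<i> * complex_of_real \<theta>)) n / real n) \<longlonglongrightarrow> sqrt ((sqrt 2 - 1) / 2))
   \<and> (\<forall>\<theta>::real. 0 \<le> \<theta> \<and> \<theta> < 2 * pi \<longrightarrow>
        weak_conv (had_cdf_scaled (exp (\<i> * complex_of_real \<theta>), 0))
          (cdf (density lborel (\<lambda>x. indicator {- sqrt 2 / 2 <..< sqrt 2 / 2} x *
                 ennreal (1 / (pi * (1 + x) * sqrt (1 - 2 * x\<^sup>2)))))) \<and>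
        (\<lambda>n. had_sd (exp (\<i> * complex_of_real \<theta>), 0) n / real n) \<longlonglongrightarrow> sqrt ((sqrt 2 - 1) / 2))"
proof -
  have A: "\<forall>\<alpha> \<beta>. cmod \<alpha> = 1 / sqrt 2 \<and> cmod \<beta> = 1 / sqrt 2 \<and>
            \<alpha> * cnj \<beta> + cnj \<alpha> * \<beta> = 0 \<longrightarrow>
            (\<forall>n. had_E (\<alpha>, \<beta>) n = 0) \<and>
            (\<lambda>n. had_sd (\<alpha>, \<beta>) n / real n) \<longlonglongrightarrow> sqrt ((2 - sqrt 2) / 2)"
    using part_a by blast
  have b1: "weak_conv (had_cdf_scaled (0, exp (\<i> * complex_of_real \<theta>)))
          (cdf (density lborel (\<lambda>x. indicator {- sqrt 2 / 2 <..< sqrt 2 / 2} x *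
                 ennreal (1 / (pi * (1 - x) * sqrt (1 - 2 * x\<^sup>2))))))" for \<theta>
    using weak_b[of \<theta>] unfolding DD1 .
  have c1: "weak_conv (had_cdf_scaled (exp (\<i> * complex_of_real \<theta>), 0))
          (cdf (density lborel (\<lambda>x. indicator {- sqrt 2 / 2 <..< sqrt 2 / 2} x *
                 ennreal (1 / (pi * (1 + x) * sqrt (1 - 2 * x\<^sup>2))))))" for \<theta>
    using weak_c[of \<theta>] unfolding DDm1 .
  show ?thesis using A b1 c1 part_b_moments part_c_moments by blast
qed

end
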